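(* Let $n,m,k,l\ge0$ with $n+m=k+l$, and let $w_1,\dots,w_p$, where $p=\min(n,m,k,l)+1$, be the minimal length representatives of the double cosets $(S_k\times S_l)\backslash S_{n+m}/(S_n\times S_m)$. Then $A_{n+m}$, as an $(A_k\otimes A_l,A_n\otimes A_m)$-bimodule (via $\gamma_{k,l}$ on the left and $\gamma_{n,m}$ on the right), is isomorphic to the direct sum of the sub-bimodules of $A_{n+m}$ generated by $Y_{w_1},\dots,Y_{w_p}$.
   Context: $A_j$ is the nilCoxeter algebra: the unital $\mathbb{Q}$-algebra generated by $Y_1,\dots,Y_{j-1}$ with relations $Y_i^2=0$, $Y_iY_r=Y_rY_i$ for $|i-r|>1$, $Y_iY_{i+1}Y_i=Y_{i+1}Y_iY_{i+1}$. For $w\in S_j$ with reduced expression $w=s_{i_1}\cdots s_{i_r}$, $Y_w=Y_{i_1}\cdots Y_{i_r}$ (well defined). $\gamma_{a,b}:A_a\otimes A_b\to A_{a+b}$ is given by $\gamma_{a,b}(Y_i\otimes1)=Y_i$, $\gamma_{a,b}(1\otimes Y_i)=Y_{a+i}$; $S_a\times S_b\subset S_{a+b}$ is the standard Young subgroup. *)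

theory Defs
  imports "HOL-Combinatorics.Combinatorics"
begin

text \<open>Elements of the free associative algebra over Q on generators Y_1, Y_2, ...
  are represented as functions from words (lists of generator indices) to their
  coefficients.\<close>

type_synonym fa = "nat list \<Rightarrow> rat"

definition wd :: "nat list \<Rightarrow> fa" where
  "wd u = (\<lambda>v. if v = u then 1 else 0)"

definition fa_mult :: "fa \<Rightarrow> fa \<Rightarrow> fa" where
  "fa_mult f g = (\<lambda>w. \<Sum>p\<in>{(u, v). u @ v = w}. f (fst p) * g (snd p))"

definition lspan :: "fa set \<Rightarrow> fa set" where
  "lspan B = {x. \<exists>S c. finite S \<and> S \<subseteq> B \<and> x = (\<lambda>w. \<Sum>b\<in>S. c b * b w)}"

definition gens :: "nat \<Rightarrow> nat set" where
  "gens j = {i. 1 \<le> i \<and> i < j}"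

definition ncfree :: "nat \<Rightarrow> fa set" where
  "ncfree j = lspan (wd ` {u. set u \<subseteq> gens j})"

text \<open>Defining relations of the nilCoxeter algebra A_j (as elements that are set to 0).\<close>
definition relators :: "nat \<Rightarrow> fa set" where
  "relators j =
     {wd [i, i] | i. i \<in> gens j}
   \<union> {(\<lambda>w. wd [i, r] w - wd [r, i] w) | i r. i \<in> gens j \<and> r \<in> gens j \<and> (i + 1 < r \<or> r + 1 < i)}
   \<union> {(\<lambda>w. wd [i, i + 1, i] w - wd [i + 1, i, i + 1] w) | i. i \<in> gens j \<and> i + 1 \<in> gens j}"

text \<open>Two-sided ideal of the free algebra generated by the relators; A_j is the
  quotient ncfree j / ncideal j, so x = y in A_j iff x - y lies in ncideal j.\<close>
definition ncideal :: "nat \<Rightarrow> fa set" where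
  "ncideal j = lspan {fa_mult (fa_mult (wd u) r) (wd v) | u v r.
       set u \<subseteq> gens j \<and> set v \<subseteq> gens j \<and> r \<in> relators j}"

definition symgrp :: "nat \<Rightarrow> (nat \<Rightarrow> nat) set" where
  "symgrp j = {p. p permutes {1..j}}"

definition simple :: "nat \<Rightarrow> nat \<Rightarrow> nat" where
  "simple i = Transposition.transpose i (Suc i)"

definition perm_of_word :: "nat list \<Rightarrow> nat \<Rightarrow> nat" where
  "perm_of_word u = foldr (\<lambda>i p. simple i \<circ> p) u id"

definition len :: "nat \<Rightarrow> (nat \<Rightarrow> nat) \<Rightarrow> nat" where
  "len j w = (LEAST r. \<exists>u. set u \<subseteq> gens j \<and> length u = r \<and> perm_of_word u = w)"

definition reduced_word :: "nat \<Rightarrow> (nat \<Rightarrow> nat) \<Rightarrow> nat list \<Rightarrow> bool" where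
  "reduced_word j w u \<longleftrightarrow> set u \<subseteq> gens j \<and> perm_of_word u = w \<and> length u = len j w"

text \<open>Y_w = Y_{i1} ... Y_{ir} for a (chosen) reduced expression; well defined in A_j.\<close>
definition Yw :: "nat \<Rightarrow> (nat \<Rightarrow> nat) \<Rightarrow> fa" where
  "Yw j w = wd (SOME u. reduced_word j w u)"

definition young :: "nat \<Rightarrow> nat \<Rightarrow> (nat \<Rightarrow> nat) set" where
  "young a b = {p. p permutes {1..a + b} \<and> p ` {1..a} = {1..a}}"

definition dcoset :: "nat \<Rightarrow> nat \<Rightarrow> nat \<Rightarrow> nat \<Rightarrow> (nat \<Rightarrow> nat) \<Rightarrow> (nat \<Rightarrow> nat) set" where
  "dcoset n m k l w = {x \<circ> w \<circ> y | x y. x \<in> young k l \<and> y \<in> young n m}"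

definition minreps :: "nat \<Rightarrow> nat \<Rightarrow> nat \<Rightarrow> nat \<Rightarrow> (nat \<Rightarrow> nat) set" where
  "minreps n m k l = {w \<in> symgrp (n + m).
      \<forall>v \<in> dcoset n m k l w. len (n + m) w \<le> len (n + m) v}"

text \<open>Generators of the image of gamma_{a,b}: Y_i (i<a) from A_a and Y_{a+i} (i<b) from A_b.\<close>
definition gamma_gens :: "nat \<Rightarrow> nat \<Rightarrow> nat set" where
  "gamma_gens a b = gens a \<union> (\<lambda>i. a + i) ` gens b"

text \<open>The sub-(A_k (x) A_l, A_n (x) A_m)-bimodule of A_{n+m} generated by Y_w (lifted to
  the free algebra): spanned by gamma_{k,l}(monomial) * Y_w * gamma_{n,m}(monomial).\<close>
definition genbimod :: "nat \<Rightarrow> nat \<Rightarrow> nat \<Rightarrow> nat \<Rightarrow> (nat \<Rightarrow> nat) \<Rightarrow> fa set" where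
  "genbimod n m k l w = lspan {fa_mult (fa_mult (wd u) (Yw (n + m) w)) (wd v) | u v.
       set u \<subseteq> gamma_gens k l \<and> set v \<subseteq> gamma_gens n m}"

end

theory Submission
  imports Defs
begin


lemma split_set_eq: "{(u, v). u @ v = w} = (\<lambda>i. (take i w, drop i w)) ` {..length w}"
proof (rule set_eqI, rule iffI)
  fix p assume "p \<in> {(u, v). u @ v = w}"
  then obtain u v where p: "p = (u,v)" "u @ v = w" by auto
  then show "p \<in> (\<lambda>i. (take i w, drop i w)) ` {..length w}"
    by (auto intro!: image_eqI[where x="length u"])
qed auto

lemma finite_split: "finite {(u, v). u @ v = w}"
  unfolding split_set_eq by simp

lemma fa_mult_wd_right:
  "fa_mult f (wd b) w = (if (\<exists>u. w = u @ b) then f (take (length w - length b) w) else 0)"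
proof -
  let ?S = "{(u, v). u @ v = w}"
  let ?p0 = "(take (length w - length b) w, b)"
  have "fa_mult f (wd b) w = (\<Sum>p\<in>?S. if p = ?p0 then f (fst p) else 0)"
    unfolding fa_mult_def wd_def
    by (rule sum.cong) auto
  also have "\<dots> = (if ?p0 \<in> ?S then f (fst ?p0) else 0)"
    by (rule sum.delta[OF finite_split])
  also have "(?p0 \<in> ?S) = (\<exists>u. w = u @ b)"
    by (auto, metis)
  finally show ?thesis by simp
qed

lemma fa_mult_wd_left:
  "fa_mult (wd a) g w = (if (\<exists>v. w = a @ v) then g (drop (length a) w) else 0)"
proof -
  let ?S = "{(u, v). u @ v = w}"
  let ?p0 = "(a, drop (length a) w)"
  have "fa_mult (wd a) g w = (\<Sum>p\<in>?S. if p = ?p0 then g (snd p) else 0)"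
    unfolding fa_mult_def wd_def
    by (rule sum.cong) auto
  also have "\<dots> = (if ?p0 \<in> ?S then g (snd ?p0) else 0)"
    by (rule sum.delta[OF finite_split])
  also have "(?p0 \<in> ?S) = (\<exists>v. w = a @ v)"
    by (auto, metis append_eq_conv_conj)
  finally show ?thesis by simp
qed

lemma wd_mult: "fa_mult (wd a) (wd b) = wd (a @ b)"
  apply (rule ext) apply (simp only: fa_mult_wd_right) by (auto simp: wd_def)

lemma fa_mult_Nil: "fa_mult f (wd []) = f"
  by (rule ext) (simp add: fa_mult_wd_right)

lemma fa_mult_diff_left:
  "fa_mult (wd a) (\<lambda>w. x w - y w) = (\<lambda>w. fa_mult (wd a) x w - fa_mult (wd a) y w)"
  by (rule ext) (simp add: fa_mult_wd_left)

lemma fa_mult_assoc_right: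
  "fa_mult (fa_mult f (wd b)) (wd c) = fa_mult f (wd (b @ c))"
proof (rule ext)
  fix w
  show "fa_mult (fa_mult f (wd b)) (wd c) w = fa_mult f (wd (b @ c)) w"
  proof (cases "\<exists>u. w = u @ b @ c")
    case True
    then obtain u where "w = u @ b @ c" by auto
    then show ?thesis by (auto simp: fa_mult_wd_right)
  next
    case False
    then show ?thesis by (auto simp: fa_mult_wd_right)
  qed
qed

lemma fa_mult_sum_right:
  "fa_mult (\<lambda>w. \<Sum>b\<in>S. c b * b w) (wd v) = (\<lambda>w. \<Sum>b\<in>S. c b * fa_mult b (wd v) w)"
  by (rule ext) (auto simp: fa_mult_wd_right)

lemma lspan_0: "(\<lambda>w. 0) \<in> lspan B"
  unfolding lspan_def by (rule CollectI, rule exI[of _ "{}"]) auto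

lemma lspan_base: "b \<in> B \<Longrightarrow> b \<in> lspan B"
  unfolding lspan_def by (auto intro!: exI[of _ "{b}"] exI[of _ "\<lambda>_. 1"])

lemma sum_extend: "finite T \<Longrightarrow> S \<subseteq> T \<Longrightarrow>
   (\<Sum>b\<in>S. c b * b w) = (\<Sum>b\<in>T. (if b \<in> S then c b else 0) * (b::fa) w)"
  by (rule sum.mono_neutral_cong_left) auto

lemma lspan_lin:
  assumes "x \<in> lspan B" "y \<in> lspan B"
  shows "(\<lambda>w. a * x w + y w) \<in> lspan B"
proof -
  obtain S1 c1 where h1: "finite S1" "S1 \<subseteq> B" "x = (\<lambda>w. \<Sum>b\<in>S1. c1 b * b w)"
    using assms(1) unfolding lspan_def by blast
  obtain S2 c2 where h2: "finite S2" "S2 \<subseteq> B" "y = (\<lambda>w. \<Sum>b\<in>S2. c2 b * b w)"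
    using assms(2) unfolding lspan_def by blast
  let ?T = "S1 \<union> S2"
  let ?c = "\<lambda>b. a * (if b \<in> S1 then c1 b else 0) + (if b \<in> S2 then c2 b else 0)"
  have "(\<lambda>w. a * x w + y w) = (\<lambda>w. \<Sum>b\<in>?T. ?c b * b w)"
  proof
    fix w
    have "x w = (\<Sum>b\<in>?T. (if b \<in> S1 then c1 b else 0) * b w)"
      unfolding h1(3) by (rule sum_extend) (use h1 h2 in auto)
    moreover have "y w = (\<Sum>b\<in>?T. (if b \<in> S2 then c2 b else 0) * b w)"
      unfolding h2(3) by (rule sum_extend) (use h1 h2 in auto)
    ultimately have "a * x w + y w = (\<Sum>b\<in>?T. a * ((if b \<in> S1 then c1 b else 0) * b w)
        + (if b \<in> S2 then c2 b else 0) * b w)"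
      by (simp only: sum_distrib_left sum.distrib)
    also have "\<dots> = (\<Sum>b\<in>?T. ?c b * b w)"
      by (rule sum.cong) (auto simp: distrib_right)
    finally show "a * x w + y w = (\<Sum>b\<in>?T. ?c b * b w)" .
  qed
  moreover have "finite ?T" "?T \<subseteq> B" using h1 h2 by auto
  ultimately show ?thesis unfolding lspan_def
    by (intro CollectI exI[of _ ?T] exI[of _ ?c]) auto
qed

lemma lspan_induct:
  assumes "x \<in> lspan B" "P (\<lambda>w. 0)" "\<And>b. b \<in> B \<Longrightarrow> P b"
    "\<And>x y a. P x \<Longrightarrow> P y \<Longrightarrow> P (\<lambda>w. a * x w + y w)"
  shows "P x"
proof -
  obtain S c where h: "finite S" "S \<subseteq> B" "x = (\<lambda>w. \<Sum>b\<in>S. c b * b w)"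
    using assms(1) unfolding lspan_def by blast
  have "P (\<lambda>w. \<Sum>b\<in>S. c b * b w)" using h(1,2)
  proof (induction S rule: finite_induct)
    case empty then show ?case using assms(2) by simp
  next
    case (insert b S)
    have "(\<lambda>w. \<Sum>b\<in>insert b S. c b * b w) = (\<lambda>w. c b * b w + (\<Sum>b\<in>S. c b * b w))"
      using insert by simp
    then show ?case using assms(3)[of b] assms(4)[OF _ insert.IH, of b "c b"] insert.prems by auto
  qed
  then show ?thesis using h by simp
qed

lemma lspan_sum:
  assumes "finite A" "\<And>a. a \<in> A \<Longrightarrow> g a \<in> lspan B"
  shows "(\<lambda>w. \<Sum>a\<in>A. c a * g a w) \<in> lspan B"
  using assms
proof (induction A rule: finite_induct)
  case empty then show ?case by (simp add: lspan_0)
next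
  case (insert a A)
  have "(\<lambda>w. \<Sum>a\<in>insert a A. c a * g a w) = (\<lambda>w. c a * g a w + (\<Sum>a\<in>A. c a * g a w))"
    using insert by simp
  then show ?case using insert lspan_lin by auto
qed

lemma lspan_subset:
  assumes "B \<subseteq> lspan C" "x \<in> lspan B"
  shows "x \<in> lspan C"
  using assms(2) by (rule lspan_induct) (use assms(1) lspan_0 lspan_lin in blast)+

lemma lspan_diff:
  assumes "x \<in> lspan B" "y \<in> lspan B"
  shows "(\<lambda>w. x w - y w) \<in> lspan B"
proof -
  have "(\<lambda>w. (-1) * y w + x w) \<in> lspan B" using assms lspan_lin by blast
  then show ?thesis by simp
qed

lemma lspan_add:
  assumes "x \<in> lspan B" "y \<in> lspan B"
  shows "(\<lambda>w. x w + y w) \<in> lspan B"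
  using lspan_lin[OF assms, of 1] by simp

lemma lspan_smult:
  assumes "x \<in> lspan B"
  shows "(\<lambda>w. a * x w) \<in> lspan B"
  using lspan_lin[OF assms lspan_0, of a] by simp

lemma lspan_fa_mult_right:
  assumes "x \<in> lspan B" "\<And>b. b \<in> B \<Longrightarrow> fa_mult b (wd v) \<in> lspan C"
  shows "fa_mult x (wd v) \<in> lspan C"
  using assms(1)
proof (rule lspan_induct)
  show "fa_mult (\<lambda>w. 0) (wd v) \<in> lspan C"
    using lspan_0[of C] by (simp add: fa_mult_wd_right[abs_def])
  fix x y :: fa and a :: rat
  assume "fa_mult x (wd v) \<in> lspan C" "fa_mult y (wd v) \<in> lspan C"
  then have "(\<lambda>w. a * fa_mult x (wd v) w + fa_mult y (wd v) w) \<in> lspan C" by (rule lspan_lin)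
  moreover have "fa_mult (\<lambda>w. a * x w + y w) (wd v) = (\<lambda>w. a * fa_mult x (wd v) w + fa_mult y (wd v) w)"
    by (rule ext) (simp add: fa_mult_wd_right)
  ultimately show "fa_mult (\<lambda>w. a * x w + y w) (wd v) \<in> lspan C" by simp
qed (use assms(2) in auto)



lemma pw_Nil[simp]: "perm_of_word [] = id" by (simp add: perm_of_word_def)
lemma pw_Cons[simp]: "perm_of_word (i # u) = simple i \<circ> perm_of_word u"
  by (simp add: perm_of_word_def)
lemma pw_append: "perm_of_word (u @ v) = perm_of_word u \<circ> perm_of_word v"
  by (induction u) auto
lemma pw_snoc: "perm_of_word (u @ [i]) = perm_of_word u \<circ> simple i"
  by (simp add: pw_append)

lemma simple_apply: "simple i x = (if x = i then Suc i else if x = Suc i then i else x)"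
  by (simp add: simple_def Transposition.transpose_def)
lemma simple_invol[simp]: "simple i (simple i x) = x" by (simp add: simple_apply)
lemma simple_comp_invol[simp]: "simple i \<circ> simple i = id" by (rule ext) simp
lemma simple_comp_invol'[simp]: "p \<circ> simple i \<circ> simple i = p" by (rule ext) simp

lemma gens_iff: "i \<in> gens N \<longleftrightarrow> 1 \<le> i \<and> i < N" by (simp add: gens_def)

lemma simple_permutes: "i \<in> gens N \<Longrightarrow> simple i permutes {1..N}"
  unfolding simple_def by (rule permutes_swap_id) (auto simp: gens_def)

lemma pw_permutes: "set u \<subseteq> gens N \<Longrightarrow> perm_of_word u permutes {1..N}"
proof (induction u)
  case (Cons i u)
  have "i \<in> gens N" "set u \<subseteq> gens N" using Cons.prems by auto
  then show ?case unfolding pw_Cons by (intro permutes_compose Cons.IH simple_permutes)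
qed simp

lemma simple_comm: "i + 1 < r \<or> r + 1 < i \<Longrightarrow> simple i \<circ> simple r = simple r \<circ> simple i"
  by (rule ext) (auto simp: simple_apply)

lemma simple_braid: "simple i \<circ> simple (i + 1) \<circ> simple i = simple (i + 1) \<circ> simple i \<circ> simple (i + 1)"
  by (rule ext) (auto simp: simple_apply)

definition invs :: "nat \<Rightarrow> (nat \<Rightarrow> nat) \<Rightarrow> (nat \<times> nat) set" where
  "invs N p = {(a, b). a \<in> {1..N} \<and> b \<in> {1..N} \<and> a < b \<and> p b < p a}"

definition ninv :: "nat \<Rightarrow> (nat \<Rightarrow> nat) \<Rightarrow> nat" where
  "ninv N p = card (invs N p)"

lemma finite_invs: "finite (invs N p)"
  by (rule finite_subset[of _ "{1..N} \<times> {1..N}"]) (auto simp: invs_def)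

lemma ninv_id[simp]: "ninv N id = 0"
proof -
  have "invs N id = {}" by (auto simp: invs_def)
  then show ?thesis by (simp add: ninv_def)
qed

lemma ninv_id'[simp]: "ninv N (\<lambda>a. a) = 0"
  using ninv_id by (simp add: id_def)

lemma ninv_left:
  assumes p: "p permutes {1..N}" and j: "j \<in> gens N"
  shows "inv p j < inv p (Suc j) \<Longrightarrow> ninv N (simple j \<circ> p) = Suc (ninv N p)"
    and "inv p (Suc j) < inv p j \<Longrightarrow> Suc (ninv N (simple j \<circ> p)) = ninv N p"
    and "inv p j \<noteq> inv p (Suc j)"
proof -
  define a0 where "a0 = inv p j"
  define b0 where "b0 = inv p (Suc j)"
  have ip: "inv p permutes {1..N}" using p by (rule permutes_inv)
  have a0N: "a0 \<in> {1..N}" "b0 \<in> {1..N}" unfolding a0_def b0_def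
    using j permutes_in_image[OF ip] by (auto simp: gens_def)
  have pa0: "p a0 = j" "p b0 = Suc j" unfolding a0_def b0_def
    using permutes_inverses[OF p] by auto
  have injp: "\<And>x y. p x = p y \<longleftrightarrow> x = y" using permutes_inj[OF p] by (auto dest: injD)
  have pj: "\<And>x. p x = j \<longleftrightarrow> x = a0" "\<And>x. p x = Suc j \<longleftrightarrow> x = b0"
    by (metis injp pa0)+
  show ne: "inv p j \<noteq> inv p (Suc j)" using pa0 unfolding a0_def[symmetric] b0_def[symmetric] by auto
  have mem: "\<And>a b. (a, b) \<notin> {(a0, b0), (b0, a0)} \<Longrightarrow>
      ((a, b) \<in> invs N (simple j \<circ> p)) = ((a, b) \<in> invs N p)"
  proof -
    fix a b assume nab: "(a, b) \<notin> {(a0, b0), (b0, a0)}"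
    show "((a, b) \<in> invs N (simple j \<circ> p)) = ((a, b) \<in> invs N p)"
    proof (cases "a < b")
      case True
      then have "p b \<noteq> p a" using injp by auto
      moreover have "\<not> (p b \<in> {j, Suc j} \<and> p a \<in> {j, Suc j})"
        using nab True pj by auto
      ultimately have "(simple j (p b) < simple j (p a)) = (p b < p a)"
        by (auto simp: simple_apply)
      then show ?thesis by (auto simp: invs_def)
    qed (auto simp: invs_def)
  qed
  have m1: "((a0, b0) \<in> invs N (simple j \<circ> p)) = (a0 < b0)"
    "(b0, a0) \<notin> invs N (simple j \<circ> p)"
    "(a0, b0) \<notin> invs N p" "((b0, a0) \<in> invs N p) = (b0 < a0)"
    using a0N pa0 by (auto simp: invs_def simple_apply)
  {
    assume lt: "inv p j < inv p (Suc j)"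
    then have "a0 < b0" unfolding a0_def b0_def .
    have "invs N (simple j \<circ> p) = insert (a0, b0) (invs N p)"
    proof (rule set_eqI)
      fix x show "(x \<in> invs N (simple j \<circ> p)) = (x \<in> insert (a0, b0) (invs N p))"
        using mem[of "fst x" "snd x"] m1 \<open>a0 < b0\<close> by (cases x) auto
    qed
    then show "ninv N (simple j \<circ> p) = Suc (ninv N p)"
      unfolding ninv_def using m1 finite_invs by simp
  }
  {
    assume lt: "inv p (Suc j) < inv p j"
    then have "b0 < a0" unfolding a0_def b0_def .
    have "invs N p = insert (b0, a0) (invs N (simple j \<circ> p))"
    proof (rule set_eqI)
      fix x show "(x \<in> invs N p) = (x \<in> insert (b0, a0) (invs N (simple j \<circ> p)))"
        using mem[of "fst x" "snd x"] m1 \<open>b0 < a0\<close> by (cases x) auto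
    qed
    then show "Suc (ninv N (simple j \<circ> p)) = ninv N p"
      unfolding ninv_def using m1 finite_invs by simp
  }
qed

lemma ninv_inv_le:
  assumes p: "p permutes {1..N}"
  shows "ninv N (inv p) \<le> ninv N p"
proof -
  have ip: "inv p permutes {1..N}" using p by (rule permutes_inv)
  have "invs N (inv p) \<subseteq> (\<lambda>(a, b). (p b, p a)) ` invs N p"
  proof
    fix x assume "x \<in> invs N (inv p)"
    then obtain c d where x: "x = (c, d)" "c \<in> {1..N}" "d \<in> {1..N}" "c < d" "inv p d < inv p c"
      by (auto simp: invs_def)
    have "inv p d \<in> {1..N}" "inv p c \<in> {1..N}"
      using x(2,3) permutes_in_image[OF ip, of c] permutes_in_image[OF ip, of d] by blast+
    then have "(inv p d, inv p c) \<in> invs N p"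
      using x permutes_inverses[OF p] by (auto simp: invs_def)
    moreover have "x = (\<lambda>(a, b). (p b, p a)) (inv p d, inv p c)"
      using x permutes_inverses[OF p] by auto
    ultimately show "x \<in> (\<lambda>(a, b). (p b, p a)) ` invs N p" by blast
  qed
  then have "ninv N (inv p) \<le> card ((\<lambda>(a, b). (p b, p a)) ` invs N p)"
    unfolding ninv_def by (rule card_mono[OF finite_imageI[OF finite_invs]])
  also have "\<dots> \<le> ninv N p" unfolding ninv_def by (rule card_image_le[OF finite_invs])
  finally show ?thesis .
qed

lemma ninv_inv:
  assumes p: "p permutes {1..N}"
  shows "ninv N (inv p) = ninv N p"
proof -
  have "ninv N (inv (inv p)) \<le> ninv N (inv p)" by (rule ninv_inv_le[OF permutes_inv[OF p]])
  moreover have "inv (inv p) = p" using permutes_bij[OF p] by (rule inv_inv_eq)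
  ultimately show ?thesis using ninv_inv_le[OF p] by simp
qed

lemma ninv_right:
  assumes p: "p permutes {1..N}" and i: "i \<in> gens N"
  shows "p i < p (Suc i) \<Longrightarrow> ninv N (p \<circ> simple i) = Suc (ninv N p)"
    and "p (Suc i) < p i \<Longrightarrow> Suc (ninv N (p \<circ> simple i)) = ninv N p"
proof -
  have ip: "inv p permutes {1..N}" using p by (rule permutes_inv)
  have bs: "bij (simple i)" unfolding simple_def by simp
  have invs: "inv (simple i) = simple i" unfolding simple_def by simp
  have e1: "inv (p \<circ> simple i) = simple i \<circ> inv p"
    using o_inv_distrib[OF permutes_bij[OF p] bs] invs by simp
  have pc: "p \<circ> simple i permutes {1..N}" by (rule permutes_compose[OF simple_permutes[OF i] p])
  have e2: "ninv N (p \<circ> simple i) = ninv N (simple i \<circ> inv p)"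
    using ninv_inv[OF pc] e1 by simp
  have iip: "inv (inv p) = p" using permutes_bij[OF p] by (rule inv_inv_eq)
  have e3: "ninv N (inv p) = ninv N p" by (rule ninv_inv[OF p])
  show "p i < p (Suc i) \<Longrightarrow> ninv N (p \<circ> simple i) = Suc (ninv N p)"
    using ninv_left(1)[OF ip i] iip e2 e3 by simp
  show "p (Suc i) < p i \<Longrightarrow> Suc (ninv N (p \<circ> simple i)) = ninv N p"
    using ninv_left(2)[OF ip i] iip e2 e3 by simp
qed

lemma perm_neq:
  assumes "p permutes S" "a \<noteq> b" shows "p a \<noteq> p b"
  using permutes_inj[OF assms(1)] assms(2) by (auto dest: injD)

lemma ninv_right_cases:
  assumes p: "p permutes {1..N}" and i: "i \<in> gens N"
  shows "ninv N (p \<circ> simple i) = Suc (ninv N p) \<or> Suc (ninv N (p \<circ> simple i)) = ninv N p"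
proof -
  have "p i \<noteq> p (Suc i)" using perm_neq[OF p] by auto
  then show ?thesis using ninv_right[OF p i] by linarith
qed

lemma ninv_le_length:
  "set u \<subseteq> gens N \<Longrightarrow> ninv N (perm_of_word u) \<le> length u"
proof (induction u rule: rev_induct)
  case Nil then show ?case by simp
next
  case (snoc i u)
  then have "ninv N (perm_of_word u) \<le> length u" "i \<in> gens N" by auto
  moreover have "perm_of_word u permutes {1..N}" by (rule pw_permutes) (use snoc in auto)
  ultimately show ?case unfolding pw_snoc length_append_singleton
    using ninv_right_cases[of "perm_of_word u" N i] by linarith
qed

lemma incr_from_succ:
  assumes "\<And>i. a \<le> i \<Longrightarrow> i < b \<Longrightarrow> f i < f (Suc i)"
  shows "a \<le> x \<Longrightarrow> x < y \<Longrightarrow> y \<le> b \<Longrightarrow> f x < (f y :: nat)"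
proof (induction y)
  case 0 then show ?case by simp
next
  case (Suc y)
  show ?case
  proof (cases "x = y")
    case True then show ?thesis using assms Suc by auto
  next
    case False
    then have "f x < f y" using Suc by auto
    also have "f y < f (Suc y)" using assms Suc by auto
    finally show ?thesis .
  qed
qed

lemma mono_unique:
  fixes f g :: "nat \<Rightarrow> nat"
  assumes f: "\<And>x y. a \<le> x \<Longrightarrow> x < y \<Longrightarrow> y \<le> b \<Longrightarrow> f x < f y"
    and g: "\<And>x y. a \<le> x \<Longrightarrow> x < y \<Longrightarrow> y \<le> b \<Longrightarrow> g x < g y"
    and im: "f ` {a..b} = g ` {a..b}" and x: "x \<in> {a..b}"
  shows "f x = g x"
proof -
  have sf: "sorted_wrt (<) (map f [a..<Suc b])" unfolding sorted_wrt_map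
    by (rule sorted_wrt_mono_rel[OF _ sorted_wrt_upt]) (use f in auto)
  have sg: "sorted_wrt (<) (map g [a..<Suc b])" unfolding sorted_wrt_map
    by (rule sorted_wrt_mono_rel[OF _ sorted_wrt_upt]) (use g in auto)
  have st: "set (map f [a..<Suc b]) = set (map g [a..<Suc b])"
    using im by (simp only: set_map set_upt atLeastLessThanSuc_atLeastAtMost)
  have sf': "sorted (map f [a..<Suc b]) \<and> distinct (map f [a..<Suc b])"
    using sf by (simp only: strict_sorted_iff)
  have sg': "sorted (map g [a..<Suc b]) \<and> distinct (map g [a..<Suc b])"
    using sg by (simp only: strict_sorted_iff)
  have "map f [a..<Suc b] = map g [a..<Suc b]"
    using sf' sg' st sorted_distinct_set_unique by blast
  then have "\<forall>y\<in>set [a..<Suc b]. f y = g y" by (simp only: map_eq_conv)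
  moreover have "x \<in> set [a..<Suc b]" using x by auto
  ultimately show ?thesis by blast
qed

lemma perm_mono_id:
  assumes p: "p permutes {1..N}" and d: "\<And>i. i \<in> gens N \<Longrightarrow> p i < p (Suc i)"
  shows "p = id"
proof (rule ext)
  fix x
  show "p x = id x"
  proof (cases "x \<in> {1..N}")
    case True
    have mono: "\<And>x y. 1 \<le> x \<Longrightarrow> x < y \<Longrightarrow> y \<le> N \<Longrightarrow> p x < p y"
      by (rule incr_from_succ[of 1 N]) (use d in \<open>auto simp: gens_def\<close>)
    have im: "p ` {1..N} = id ` {1..N}" using permutes_image[OF p] by simp
    show ?thesis by (rule mono_unique[of 1 N p id, OF mono _ im True]) auto
  next
    case False then show ?thesis using permutes_not_in[OF p] by simp
  qed
qed

lemma gamma_gens_eq: "gamma_gens a b = gens (a + b) - {a}"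
proof (rule set_eqI)
  fix x
  show "x \<in> gamma_gens a b \<longleftrightarrow> x \<in> gens (a+b) - {a}"
  proof
    assume "x \<in> gamma_gens a b" then show "x \<in> gens (a+b) - {a}"
      by (auto simp: gamma_gens_def gens_def)
  next
    assume h: "x \<in> gens (a+b) - {a}"
    show "x \<in> gamma_gens a b"
    proof (cases "x < a")
      case True then show ?thesis using h by (auto simp: gamma_gens_def gens_def)
    next
      case False then have "x = a + (x - a)" "x - a \<in> gens b" using h by (auto simp: gens_def)
      then show ?thesis unfolding gamma_gens_def by blast
    qed
  qed
qed

lemma young_simple:
  assumes "i \<in> gens (a + b)" "i \<noteq> a" shows "simple i \<in> young a b"
proof -
  have "simple i ` {1..a} = {1..a}"
  proof (cases "i < a")
    case True then show ?thesis unfolding simple_def using assms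
      by (simp add: gens_def)
  next
    case False then have "i > a" using assms by auto
    then have "simple i x = x" if "x \<in> {1..a}" for x using that by (auto simp: simple_apply)
    then show ?thesis by auto
  qed
  then show ?thesis using simple_permutes[OF assms(1)] by (simp add: young_def)
qed

lemma young_comp: "p \<in> young a b \<Longrightarrow> q \<in> young a b \<Longrightarrow> p \<circ> q \<in> young a b"
proof -
  assume "p \<in> young a b" "q \<in> young a b"
  moreover have "(p \<circ> q) ` {1..a} = p ` (q ` {1..a})" by (simp add: image_comp)
  ultimately show ?thesis unfolding young_def using permutes_compose by auto
qed

lemma young_id[simp]: "id \<in> young a b" by (simp add: young_def)

lemma young_pw: "set u \<subseteq> gamma_gens a b \<Longrightarrow> perm_of_word u \<in> young a b"
  by (induction u) (auto simp: gamma_gens_eq intro!: young_comp young_simple)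

lemma young_reduced_word:
  assumes "p \<in> young a b"
  shows "\<exists>u. set u \<subseteq> gamma_gens a b \<and> perm_of_word u = p \<and> length u = ninv (a + b) p"
  using assms
proof (induction "ninv (a + b) p" arbitrary: p rule: less_induct)
  case less
  have p: "p permutes {1..a+b}" and pa: "p ` {1..a} = {1..a}" using less.prems by (auto simp: young_def)
  show ?case
  proof (cases "\<exists>i \<in> gens (a + b). p (Suc i) < p i")
    case False
    then have "\<And>i. i \<in> gens (a + b) \<Longrightarrow> p i < p (Suc i)"
      using perm_neq[OF p] by (metis n_not_Suc_n nat_neq_iff)
    then have "p = id" by (rule perm_mono_id[OF p])
    then show ?thesis by (auto intro: exI[of _ "[]"])
  next
    case True
    then obtain i where i: "i \<in> gens (a + b)" "p (Suc i) < p i" by auto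
    have ia: "i \<noteq> a"
    proof
      assume "i = a"
      then have "a \<ge> 1" "p a \<in> {1..a}" using i pa by (auto simp: gens_def)
      moreover have "p (Suc a) \<notin> {1..a}"
      proof
        assume "p (Suc a) \<in> {1..a}"
        then have "p (Suc a) \<in> p ` {1..a}" using pa by simp
        then obtain y where "y \<in> {1..a}" "p y = p (Suc a)" by auto
        then show False using perm_neq[OF p, of y "Suc a"] by auto
      qed
      moreover have "p (Suc a) \<in> {1..a+b}" using permutes_in_image[OF p, of "Suc a"] i \<open>i = a\<close>
        by (auto simp: gens_def)
      ultimately show False using i \<open>i = a\<close> by auto
    qed
    have q: "p \<circ> simple i \<in> young a b"
      using young_comp[OF less.prems young_simple[OF i(1) ia]] .
    have lt: "ninv (a + b) (p \<circ> simple i) < ninv (a + b) p"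
      using ninv_right(2)[OF p i(1) i(2)] by simp
    obtain u where u: "set u \<subseteq> gamma_gens a b" "perm_of_word u = p \<circ> simple i"
      "length u = ninv (a + b) (p \<circ> simple i)"
      using less.hyps[OF lt q] by blast
    have "set (u @ [i]) \<subseteq> gamma_gens a b" using u i ia by (auto simp: gamma_gens_eq)
    moreover have "perm_of_word (u @ [i]) = p" unfolding pw_snoc u(2) by (rule simple_comp_invol')
    moreover have "length (u @ [i]) = ninv (a + b) p"
      using u(3) ninv_right(2)[OF p i(1) i(2)] by simp
    ultimately show ?thesis by (intro exI[of _ "u @ [i]"]) blast
  qed
qed

lemma symgrp_young: "p \<in> symgrp N \<Longrightarrow> p \<in> young 0 N"
  by (simp add: symgrp_def young_def)

lemma gamma_gens_0: "gamma_gens 0 N = gens N"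
  by (auto simp: gamma_gens_eq gens_def)

lemma reduced_word_exists:
  assumes "p \<in> symgrp N"
  shows "\<exists>u. set u \<subseteq> gens N \<and> perm_of_word u = p \<and> length u = ninv N p"
  using young_reduced_word[OF symgrp_young[OF assms]] by (simp add: gamma_gens_0)

lemma len_eq:
  assumes "p \<in> symgrp N"
  shows "len N p = ninv N p"
  unfolding len_def
proof (rule Least_equality)
  show "\<exists>u. set u \<subseteq> gens N \<and> length u = ninv N p \<and> perm_of_word u = p"
    using reduced_word_exists[OF assms] by auto
next
  fix y assume "\<exists>u. set u \<subseteq> gens N \<and> length u = y \<and> perm_of_word u = p"
  then show "ninv N p \<le> y" using ninv_le_length by blast
qed



definition rd :: "nat \<Rightarrow> nat list \<Rightarrow> bool" where
  "rd N u \<longleftrightarrow> set u \<subseteq> gens N \<and> length u = ninv N (perm_of_word u)"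

definition eqv :: "nat \<Rightarrow> fa \<Rightarrow> fa \<Rightarrow> bool" where
  "eqv N x y \<longleftrightarrow> (\<lambda>w. x w - y w) \<in> ncideal N"

lemma eqv_refl: "eqv N x x"
  unfolding eqv_def ncideal_def using lspan_0 by simp

lemma eqv_sym: "eqv N x y \<Longrightarrow> eqv N y x"
  unfolding eqv_def ncideal_def using lspan_smult[of _ _ "-1"] by fastforce

lemma eqv_trans: "eqv N x y \<Longrightarrow> eqv N y z \<Longrightarrow> eqv N x z"
  unfolding eqv_def ncideal_def using lspan_add by fastforce

lemma eqv_ideal: "eqv N x y \<Longrightarrow> y \<in> ncideal N \<Longrightarrow> x \<in> ncideal N"
  unfolding eqv_def ncideal_def using lspan_add by fastforce

lemma ideal_gen:
  "set a \<subseteq> gens N \<Longrightarrow> set b \<subseteq> gens N \<Longrightarrow> r \<in> relators N \<Longrightarrow>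
    fa_mult (fa_mult (wd a) r) (wd b) \<in> ncideal N"
  unfolding ncideal_def by (rule lspan_base) blast

lemma I_sq:
  assumes "set a \<subseteq> gens N" "i \<in> gens N"
  shows "wd (a @ [i, i]) \<in> ncideal N"
proof -
  have "wd [i, i] \<in> relators N" using assms by (auto simp: relators_def)
  from ideal_gen[OF assms(1) _ this, of "[]"] show ?thesis by (simp add: fa_mult_Nil wd_mult)
qed

lemma I_comm:
  assumes "set a \<subseteq> gens N" "i \<in> gens N" "r \<in> gens N" "i + 1 < r \<or> r + 1 < i"
  shows "eqv N (wd (a @ [i, r])) (wd (a @ [r, i]))"
proof -
  have "(\<lambda>w. wd [i, r] w - wd [r, i] w) \<in> relators N" using assms unfolding relators_def by blast
  from ideal_gen[OF assms(1) _ this, of "[]"] show ?thesis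
    by (simp add: fa_mult_Nil wd_mult fa_mult_diff_left eqv_def)
qed

lemma I_braid:
  assumes "set a \<subseteq> gens N" "i \<in> gens N" "i + 1 \<in> gens N"
  shows "eqv N (wd (a @ [i, i + 1, i])) (wd (a @ [i + 1, i, i + 1]))"
proof -
  have "(\<lambda>w. wd [i, i + 1, i] w - wd [i + 1, i, i + 1] w) \<in> relators N"
    using assms unfolding relators_def by blast
  from ideal_gen[OF assms(1) _ this, of "[]"] show ?thesis
    by (simp add: fa_mult_Nil wd_mult fa_mult_diff_left eqv_def)
qed

lemma I_right:
  assumes "x \<in> ncideal N" "set c \<subseteq> gens N"
  shows "fa_mult x (wd c) \<in> ncideal N"
  using assms(1) unfolding ncideal_def
proof (rule lspan_fa_mult_right)
  fix b assume "b \<in> {fa_mult (fa_mult (wd u) r) (wd v) |u v r.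
             set u \<subseteq> gens N \<and> set v \<subseteq> gens N \<and> r \<in> relators N}"
  then obtain u v r where b: "b = fa_mult (fa_mult (wd u) r) (wd v)" "set u \<subseteq> gens N"
    "set v \<subseteq> gens N" "r \<in> relators N" by blast
  have "fa_mult b (wd c) = fa_mult (fa_mult (wd u) r) (wd (v @ c))"
    unfolding b(1) by (rule fa_mult_assoc_right)
  then show "fa_mult b (wd c) \<in> lspan {fa_mult (fa_mult (wd u) r) (wd v) |u v r.
             set u \<subseteq> gens N \<and> set v \<subseteq> gens N \<and> r \<in> relators N}"
  proof -
    have "fa_mult (fa_mult (wd u) r) (wd (v @ c)) \<in> {fa_mult (fa_mult (wd u) r) (wd v) |u v r.
             set u \<subseteq> gens N \<and> set v \<subseteq> gens N \<and> r \<in> relators N}"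
    proof -
      have "set (v @ c) \<subseteq> gens N" using b assms(2) by simp
      then show ?thesis using b by blast
    qed
    then show ?thesis using \<open>fa_mult b (wd c) = _\<close> by (simp add: lspan_base)
  qed
qed

lemma fa_mult_diff_right:
  "fa_mult (\<lambda>w. x w - y w) (wd c) = (\<lambda>w. fa_mult x (wd c) w - fa_mult y (wd c) w)"
  by (rule ext) (simp add: fa_mult_wd_right)

lemma eqv_snoc:
  assumes "eqv N (wd u) (wd v)" "set c \<subseteq> gens N"
  shows "eqv N (wd (u @ c)) (wd (v @ c))"
  using I_right[OF assms[unfolded eqv_def]]
  by (simp add: fa_mult_diff_right wd_mult eqv_def)

lemma ideal_snoc:
  assumes "wd u \<in> ncideal N" "set c \<subseteq> gens N"
  shows "wd (u @ c) \<in> ncideal N"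
  using I_right[OF assms] by (simp add: wd_mult)

lemma pw_symgrp: "set u \<subseteq> gens N \<Longrightarrow> perm_of_word u \<in> symgrp N"
  using pw_permutes by (simp add: symgrp_def)

lemma symgrp_comp: "p \<in> symgrp N \<Longrightarrow> q \<in> symgrp N \<Longrightarrow> p \<circ> q \<in> symgrp N"
  by (simp add: symgrp_def permutes_compose)

lemma simple_symgrp: "i \<in> gens N \<Longrightarrow> simple i \<in> symgrp N"
  unfolding symgrp_def mem_Collect_eq by (rule simple_permutes)

lemma rd_exists: "p \<in> symgrp N \<Longrightarrow> \<exists>z. rd N z \<and> perm_of_word z = p"
  using reduced_word_exists[of p N] by (auto simp: rd_def)

lemma rd_Nil: "rd N []" by (simp add: rd_def)

lemma rd_snoc:
  assumes "rd N (u @ [i])"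
  shows "rd N u" "perm_of_word u = perm_of_word (u @ [i]) \<circ> simple i"
    "perm_of_word (u @ [i]) (Suc i) < perm_of_word (u @ [i]) i" "i \<in> gens N"
    "Suc (ninv N (perm_of_word (u @ [i]) \<circ> simple i)) = ninv N (perm_of_word (u @ [i]))"
proof -
  let ?w = "perm_of_word (u @ [i])"
  have su: "set u \<subseteq> gens N" and i: "i \<in> gens N" using assms by (auto simp: rd_def)
  then show "i \<in> gens N" by simp
  show pu: "perm_of_word u = ?w \<circ> simple i" by (simp add: pw_snoc comp_assoc)
  have w: "?w permutes {1..N}" using assms by (intro pw_permutes) (auto simp: rd_def)
  have L: "length u + 1 = ninv N ?w" using assms by (simp add: rd_def)
  have le: "ninv N (perm_of_word u) \<le> length u" using ninv_le_length[OF su] .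
  have ne: "?w i \<noteq> ?w (Suc i)" using perm_neq[OF w] by simp
  show desc: "?w (Suc i) < ?w i"
  proof (rule ccontr)
    assume "\<not> ?w (Suc i) < ?w i"
    then have "?w i < ?w (Suc i)" using ne by linarith
    then have "ninv N (?w \<circ> simple i) = Suc (ninv N ?w)" using ninv_right(1)[OF w i] by simp
    then show False using le L pu by simp
  qed
  show e: "Suc (ninv N (?w \<circ> simple i)) = ninv N ?w" using ninv_right(2)[OF w i desc] .
  show "rd N u" unfolding rd_def using su e L pu by simp
qed

lemma rd_snoc_intro:
  assumes "rd N z" "i \<in> gens N" "perm_of_word z = p \<circ> simple i"
    "Suc (ninv N (p \<circ> simple i)) = ninv N p"
  shows "rd N (z @ [i])" "perm_of_word (z @ [i]) = p"
proof -
  show pz: "perm_of_word (z @ [i]) = p" unfolding pw_snoc assms(3) by (rule simple_comp_invol')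
  show "rd N (z @ [i])" using assms pz by (auto simp: rd_def)
qed

lemma descent_rd:
  assumes "p \<in> symgrp N" "i \<in> gens N" "p (Suc i) < p i"
  shows "\<exists>z. rd N (z @ [i]) \<and> perm_of_word (z @ [i]) = p \<and> perm_of_word z = p \<circ> simple i
     \<and> Suc (ninv N (p \<circ> simple i)) = ninv N p"
proof -
  have pp: "p permutes {1..N}" using assms by (simp add: symgrp_def)
  have e: "Suc (ninv N (p \<circ> simple i)) = ninv N p" using ninv_right(2)[OF pp assms(2,3)] .
  obtain z where z: "rd N z" "perm_of_word z = p \<circ> simple i"
    using rd_exists[OF symgrp_comp[OF assms(1) simple_symgrp[OF assms(2)]]] by blast
  show ?thesis using rd_snoc_intro[OF z(1) assms(2) z(2) e] z e by blast
qed

lemma rd_length: "rd N u \<Longrightarrow> rd N v \<Longrightarrow> perm_of_word u = perm_of_word v \<Longrightarrow> length u = length v"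
  by (simp add: rd_def)



lemma symgrp_permutes: "p \<in> symgrp N \<Longrightarrow> p permutes {1..N}"
  by (simp add: symgrp_def)

lemma far_case:
  assumes IHB: "\<And>u' v'. length u' < L \<Longrightarrow> rd N u' \<Longrightarrow> rd N v' \<Longrightarrow>
      perm_of_word u' = perm_of_word v' \<Longrightarrow> eqv N (wd u') (wd v')"
    and u: "rd N (u @ [i])" and v: "rd N (v @ [j])"
    and eq: "perm_of_word (u @ [i]) = perm_of_word (v @ [j])" and L: "length (u @ [i]) = L"
    and far: "i + 1 < j \<or> j + 1 < i"
  shows "eqv N (wd (u @ [i])) (wd (v @ [j]))"
proof -
  define w where "w = perm_of_word (u @ [i])"
  note ru = rd_snoc[OF u, folded w_def]
  note rv = rd_snoc[OF v, folded eq, folded w_def]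
  have wS: "w \<in> symgrp N" unfolding w_def using u by (intro pw_symgrp) (auto simp: rd_def)
  have sij: "\<And>x. simple i (simple j x) = simple j (simple i x)"
    using far by (auto simp: simple_apply)
  have w1S: "w \<circ> simple i \<in> symgrp N" by (rule symgrp_comp[OF wS simple_symgrp[OF ru(4)]])
  have w2S: "w \<circ> simple j \<in> symgrp N" by (rule symgrp_comp[OF wS simple_symgrp[OF rv(4)]])
  have d1: "(w \<circ> simple i) (Suc j) < (w \<circ> simple i) j"
    using rv(3) far by (auto simp: simple_apply)
  obtain z where z: "rd N (z @ [j])" "perm_of_word (z @ [j]) = w \<circ> simple i"
    "perm_of_word z = w \<circ> simple i \<circ> simple j"
    using descent_rd[OF w1S rv(4) d1] by blast
  have e1: "eqv N (wd u) (wd (z @ [j]))"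
    using IHB[of u "z @ [j]"] L ru(1) z(1) z(2) ru(2) by simp
  have d2: "(w \<circ> simple j) (Suc i) < (w \<circ> simple j) i"
    using ru(3) far by (auto simp: simple_apply)
  have e2ninv: "Suc (ninv N (w \<circ> simple j \<circ> simple i)) = ninv N (w \<circ> simple j)"
    using ninv_right(2)[OF symgrp_permutes[OF w2S] ru(4) d2] .
  have pz: "perm_of_word z = w \<circ> simple j \<circ> simple i"
    unfolding z(3) by (rule ext) (simp add: sij)
  have rz: "rd N (z @ [i])" "perm_of_word (z @ [i]) = w \<circ> simple j"
    using rd_snoc_intro[OF _ ru(4) pz e2ninv] rd_snoc(1)[OF z(1)] by auto
  have e2: "eqv N (wd v) (wd (z @ [i]))"
    using IHB[of v "z @ [i]"] L rv(1) rz rv(2) rd_length[OF u v eq] by simp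
  have sz: "set z \<subseteq> gens N" using z(1) by (auto simp: rd_def)
  have "eqv N (wd (u @ [i])) (wd (z @ [j, i]))"
    using eqv_snoc[OF e1, of "[i]"] ru(4) by simp
  moreover have "eqv N (wd (z @ [j, i])) (wd (z @ [i, j]))"
    using I_comm[OF sz rv(4) ru(4)] far by auto
  moreover have "eqv N (wd (z @ [i, j])) (wd (v @ [j]))"
    using eqv_sym[OF eqv_snoc[OF e2, of "[j]"]] rv(4) by simp
  ultimately show ?thesis using eqv_trans by blast
qed

lemma braid_case:
  assumes IHB: "\<And>u' v'. length u' < L \<Longrightarrow> rd N u' \<Longrightarrow> rd N v' \<Longrightarrow>
      perm_of_word u' = perm_of_word v' \<Longrightarrow> eqv N (wd u') (wd v')"
    and u: "rd N (u @ [i])" and v: "rd N (v @ [Suc i])"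
    and eq: "perm_of_word (u @ [i]) = perm_of_word (v @ [Suc i])" and L: "length (u @ [i]) = L"
  shows "eqv N (wd (u @ [i])) (wd (v @ [Suc i]))"
proof -
  define w where "w = perm_of_word (u @ [i])"
  note ru = rd_snoc[OF u, folded w_def]
  note rv = rd_snoc[OF v, folded eq, folded w_def]
  have Lw: "ninv N w = L" using u L unfolding w_def rd_def by simp
  have wS: "w \<in> symgrp N" unfolding w_def using u by (intro pw_symgrp) (auto simp: rd_def)
  define w1 where "w1 = w \<circ> simple i"
  define w2 where "w2 = w1 \<circ> simple (Suc i)"
  define w' where "w' = w \<circ> simple (Suc i)"
  define y where "y = w' \<circ> simple i"
  have w1S: "w1 \<in> symgrp N" unfolding w1_def by (rule symgrp_comp[OF wS simple_symgrp[OF ru(4)]])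
  have w2S: "w2 \<in> symgrp N" unfolding w2_def by (rule symgrp_comp[OF w1S simple_symgrp[OF rv(4)]])
  have w'S: "w' \<in> symgrp N" unfolding w'_def by (rule symgrp_comp[OF wS simple_symgrp[OF rv(4)]])
  have d1: "w1 (Suc (Suc i)) < w1 (Suc i)"
    using ru(3) rv(3) unfolding w1_def by (auto simp: simple_apply)
  have d2: "w2 (Suc i) < w2 i"
    using ru(3) rv(3) unfolding w2_def w1_def by (auto simp: simple_apply)
  have d3: "w' (Suc i) < w' i"
    using ru(3) rv(3) unfolding w'_def by (auto simp: simple_apply)
  have n1: "Suc (ninv N w1) = L" using ru(5) Lw unfolding w1_def by simp
  have n2: "Suc (ninv N w2) = ninv N w1"
    using ninv_right(2)[OF symgrp_permutes[OF w1S] rv(4) d1] unfolding w2_def .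
  have n'': "Suc (ninv N w') = L" using rv(5) Lw unfolding w'_def by simp
  have ny: "Suc (ninv N y) = ninv N w'"
    using ninv_right(2)[OF symgrp_permutes[OF w'S] ru(4) d3] unfolding y_def .
  obtain z where z: "rd N (z @ [i])" "perm_of_word (z @ [i]) = w2"
    "perm_of_word z = w2 \<circ> simple i" "Suc (ninv N (w2 \<circ> simple i)) = ninv N w2"
    using descent_rd[OF w2S ru(4) d2] by blast
  have rz: "rd N z" using rd_snoc(1)[OF z(1)] .
  have r1: "rd N (z @ [i] @ [Suc i])" "perm_of_word (z @ [i] @ [Suc i]) = w1"
    using rd_snoc_intro[OF z(1) rv(4) z(2)[unfolded w2_def] n2[unfolded w2_def]] by auto
  have e1: "eqv N (wd u) (wd (z @ [i, Suc i]))"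
    using IHB[of u "z @ [i, Suc i]"] L ru(1) r1 ru(2) unfolding w1_def by simp
  have braid: "\<And>x. simple i (simple (Suc i) (simple i (simple (Suc i) x))) = simple (Suc i) (simple i x)"
    by (auto simp: simple_apply)
  have pz: "perm_of_word z = y \<circ> simple (Suc i)"
    unfolding z(3) y_def w'_def w2_def w1_def by (rule ext) (auto simp: simple_apply)
  have ny2: "Suc (ninv N (y \<circ> simple (Suc i))) = ninv N y"
    using pz[symmetric] z(3) z(4) n2 n1 ny n'' by simp
  have r2: "rd N (z @ [Suc i])" "perm_of_word (z @ [Suc i]) = y"
    using rd_snoc_intro[OF rz rv(4) pz ny2] by auto
  have r3: "rd N (z @ [Suc i] @ [i])" "perm_of_word (z @ [Suc i] @ [i]) = w'"
    using rd_snoc_intro[OF r2(1) ru(4) r2(2)[unfolded y_def] ny[unfolded y_def]] by auto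
  have e2: "eqv N (wd v) (wd (z @ [Suc i, i]))"
    using IHB[of v "z @ [Suc i, i]"] L rv(1) r3 rv(2) rd_length[OF u v eq] unfolding w'_def by simp
  have sz: "set z \<subseteq> gens N" using rz by (auto simp: rd_def)
  have "eqv N (wd (u @ [i])) (wd (z @ [i, Suc i, i]))"
    using eqv_snoc[OF e1, of "[i]"] ru(4) by simp
  moreover have "eqv N (wd (z @ [i, Suc i, i])) (wd (z @ [Suc i, i, Suc i]))"
    using I_braid[OF sz ru(4)] rv(4) by simp
  moreover have "eqv N (wd (z @ [Suc i, i, Suc i])) (wd (v @ [Suc i]))"
    using eqv_sym[OF eqv_snoc[OF e2, of "[Suc i]"]] rv(4) by simp
  ultimately show ?thesis using eqv_trans by blast
qed

lemma matsumoto: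
  "(set u \<subseteq> gens N \<longrightarrow> \<not> rd N u \<longrightarrow> wd u \<in> ncideal N) \<and>
   (\<forall>v. rd N u \<longrightarrow> rd N v \<longrightarrow> perm_of_word u = perm_of_word v \<longrightarrow> eqv N (wd u) (wd v))"
proof (induction "length u" arbitrary: u rule: less_induct)
  case less
  have IHA: "\<And>u'. length u' < length u \<Longrightarrow> set u' \<subseteq> gens N \<Longrightarrow> \<not> rd N u' \<Longrightarrow> wd u' \<in> ncideal N"
    using less by blast
  have IHB: "\<And>u' v'. length u' < length u \<Longrightarrow> rd N u' \<Longrightarrow> rd N v' \<Longrightarrow>
      perm_of_word u' = perm_of_word v' \<Longrightarrow> eqv N (wd u') (wd v')"
    using less by blast
  show ?case
  proof (intro conjI impI allI)
    assume su: "set u \<subseteq> gens N" and nr: "\<not> rd N u"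
    have "u \<noteq> []" using nr rd_Nil by blast
    then obtain u' i where ueq: "u = u' @ [i]" by (metis rev_exhaust)
    have su': "set u' \<subseteq> gens N" and i: "i \<in> gens N" using su ueq by auto
    show "wd u \<in> ncideal N"
    proof (cases "rd N u'")
      case False
      then have "wd u' \<in> ncideal N" using IHA[OF _ su'] ueq by simp
      then show ?thesis using ideal_snoc[of u' N "[i]"] i ueq by simp
    next
      case True
      define w' where "w' = perm_of_word u'"
      have w'S: "w' \<in> symgrp N" unfolding w'_def by (rule pw_symgrp[OF su'])
      have lw: "length u' = ninv N w'" using True unfolding rd_def w'_def by simp
      have pu: "perm_of_word u = w' \<circ> simple i" unfolding ueq w'_def by (rule pw_snoc)
      have nd: "\<not> w' i < w' (Suc i)"
      proof
        assume "w' i < w' (Suc i)"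
        then have "ninv N (w' \<circ> simple i) = Suc (ninv N w')"
          using ninv_right(1)[OF symgrp_permutes[OF w'S] i] by simp
        then have "rd N u" unfolding rd_def using su pu lw ueq by simp
        then show False using nr by simp
      qed
      have "w' i \<noteq> w' (Suc i)" using perm_neq[OF symgrp_permutes[OF w'S]] by simp
      then have d: "w' (Suc i) < w' i" using nd by linarith
      obtain z where z: "rd N (z @ [i])" "perm_of_word (z @ [i]) = w'"
        using descent_rd[OF w'S i d] by blast
      have "eqv N (wd u') (wd (z @ [i]))"
        using IHB[OF _ True z(1)] z(2) ueq unfolding w'_def by simp
      then have e: "eqv N (wd u) (wd (z @ [i, i]))"
        using eqv_snoc[of N u' "z @ [i]" "[i]"] i ueq by simp
      have "wd (z @ [i, i]) \<in> ncideal N"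
        using I_sq[of z N i] z(1) i by (auto simp: rd_def)
      then show ?thesis using eqv_ideal[OF e] by simp
    qed
  next
    fix v assume ru: "rd N u" and rv: "rd N v" and eq: "perm_of_word u = perm_of_word v"
    have len: "length u = length v" using rd_length[OF ru rv eq] .
    show "eqv N (wd u) (wd v)"
    proof (cases "u = []")
      case True
      then have "v = []" using len by simp
      then show ?thesis using True eqv_refl by simp
    next
      case False
      then obtain u' i where ueq: "u = u' @ [i]" by (metis rev_exhaust)
      have "v \<noteq> []" using False len by auto
      then obtain v' j where veq: "v = v' @ [j]" by (metis rev_exhaust)
      note IHB2 = IHB[unfolded ueq]
      have ru': "rd N (u' @ [i])" and rv': "rd N (v' @ [j])" using ru rv ueq veq by simp_all
      have eq': "perm_of_word (u' @ [i]) = perm_of_word (v' @ [j])" using eq ueq veq by simp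
      consider "i = j" | "j = Suc i" | "i = Suc j" | "i + 1 < j \<or> j + 1 < i" by linarith
      then show ?thesis
      proof cases
        case 1
        have a: "rd N u'" "perm_of_word u' = perm_of_word (u' @ [i]) \<circ> simple i" "i \<in> gens N"
          using rd_snoc[OF ru'] by auto
        have b: "rd N v'" "perm_of_word v' = perm_of_word (v' @ [j]) \<circ> simple j"
          using rd_snoc[OF rv'] by auto
        have pe: "perm_of_word u' = perm_of_word v'" using a(2) b(2) eq' 1 by metis
        have "eqv N (wd u') (wd v')" by (rule IHB2[OF _ a(1) b(1) pe]) simp
        then have "eqv N (wd (u' @ [i])) (wd (v' @ [i]))"
          by (rule eqv_snoc) (use a(3) in simp)
        then show ?thesis unfolding ueq veq using 1 by simp
      next
        case 2
        have rv2: "rd N (v' @ [Suc i])" using rv' 2 by simp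
        have eq2: "perm_of_word (u' @ [i]) = perm_of_word (v' @ [Suc i])" using eq' 2 by simp
        have L: "length (u' @ [i]) = length u" using ueq by simp
        have "eqv N (wd (u' @ [i])) (wd (v' @ [Suc i]))"
          by (rule braid_case[where L="length u" and N=N, OF IHB ru' rv2 eq2 L])
        then show ?thesis using ueq veq 2 by simp
      next
        case 3
        have ru2: "rd N (u' @ [Suc j])" using ru' 3 by simp
        have eq2: "perm_of_word (v' @ [j]) = perm_of_word (u' @ [Suc j])" using eq' 3 by simp
        have L: "length (v' @ [j]) = length u" using veq len by simp
        have "eqv N (wd (v' @ [j])) (wd (u' @ [Suc j]))"
          by (rule braid_case[where L="length u" and N=N, OF IHB rv' ru2 eq2 L])
        then show ?thesis using ueq veq 3 eqv_sym by simp
      next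
        case 4
        have L: "length (u' @ [i]) = length u" using ueq by simp
        have "eqv N (wd (u' @ [i])) (wd (v' @ [j]))"
          by (rule far_case[where L="length u" and N=N, OF IHB ru' rv' eq' L 4])
        then show ?thesis using ueq veq by simp
      qed
    qed
  qed
qed

lemma Yw_rd:
  assumes "p \<in> symgrp N"
  shows "\<exists>y. Yw N p = wd y \<and> rd N y \<and> perm_of_word y = p"
proof -
  have ex: "\<exists>y. reduced_word N p y"
    using reduced_word_exists[OF assms] len_eq[OF assms] by (auto simp: reduced_word_def)
  let ?y = "SOME y. reduced_word N p y"
  have "reduced_word N p ?y" using someI_ex[OF ex] .
  then have "rd N ?y" "perm_of_word ?y = p"
    using len_eq[OF assms] by (auto simp: reduced_word_def rd_def)
  then show ?thesis by (auto simp: Yw_def)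
qed

lemma word_reduce:
  assumes "set u \<subseteq> gens N"
  shows "eqv N (wd u) (if rd N u then Yw N (perm_of_word u) else (\<lambda>w. 0))"
proof (cases "rd N u")
  case True
  obtain y where y: "Yw N (perm_of_word u) = wd y" "rd N y" "perm_of_word y = perm_of_word u"
    using Yw_rd[OF pw_symgrp[OF assms]] by blast
  then show ?thesis using True matsumoto[of u N] by simp
next
  case False
  then have "wd u \<in> ncideal N" using matsumoto[of u N] assms by simp
  then show ?thesis using False by (simp add: eqv_def)
qed



definition rr :: "nat \<Rightarrow> nat \<Rightarrow> (nat \<Rightarrow> nat) \<Rightarrow> nat" where
  "rr n k w = card (w ` {1..n} \<inter> {1..k})"

lemma dcoset_self: "w \<in> dcoset n m k l w"
  unfolding dcoset_def by (rule CollectI, rule exI[of _ id], rule exI[of _ id]) simp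

lemma dcoset_trans:
  assumes "u \<in> dcoset n m k l w" "v \<in> dcoset n m k l u"
  shows "v \<in> dcoset n m k l w"
proof -
  obtain x y where xy: "u = x \<circ> w \<circ> y" "x \<in> young k l" "y \<in> young n m"
    using assms(1) unfolding dcoset_def by blast
  obtain x' y' where xy': "v = x' \<circ> u \<circ> y'" "x' \<in> young k l" "y' \<in> young n m"
    using assms(2) unfolding dcoset_def by blast
  have "v = (x' \<circ> x) \<circ> w \<circ> (y \<circ> y')" using xy xy' by (simp add: comp_assoc)
  moreover have "x' \<circ> x \<in> young k l" "y \<circ> y' \<in> young n m" using xy xy' young_comp by auto
  ultimately show ?thesis unfolding dcoset_def by blast
qed

lemma dcoset_symgrp:
  assumes NE: "n + m = k + l" and w: "w \<in> symgrp (n + m)" and v: "v \<in> dcoset n m k l w"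
  shows "v \<in> symgrp (n + m)"
proof -
  obtain x y where xy: "v = x \<circ> w \<circ> y" "x \<in> young k l" "y \<in> young n m"
    using v unfolding dcoset_def by blast
  have "x permutes {1..n+m}" using xy(2) NE by (simp add: young_def)
  moreover have "y permutes {1..n+m}" using xy(3) by (simp add: young_def)
  moreover have "w permutes {1..n+m}" using w by (simp add: symgrp_def)
  ultimately show ?thesis unfolding xy(1) symgrp_def mem_Collect_eq
    by (intro permutes_compose)
qed

lemma finite_symgrp: "finite (symgrp N)"
  unfolding symgrp_def by (rule finite_permutations) simp

lemma rr_inv:
  assumes "x \<in> young k l" "y \<in> young n m"
  shows "rr n k (x \<circ> w \<circ> y) = rr n k w"
proof -
  have yA: "y ` {1..n} = {1..n}" using assms(2) by (simp add: young_def)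
  have xK: "x ` {1..k} = {1..k}" using assms(1) by (simp add: young_def)
  have injx: "inj x" using assms(1) unfolding young_def by (auto intro: permutes_inj)
  have "(x \<circ> w \<circ> y) ` {1..n} = x ` (w ` (y ` {1..n}))" by (simp add: image_comp)
  also have "\<dots> = x ` (w ` {1..n})" using yA by simp
  finally have "(x \<circ> w \<circ> y) ` {1..n} \<inter> {1..k} = x ` (w ` {1..n}) \<inter> x ` {1..k}" using xK by simp
  also have "\<dots> = x ` (w ` {1..n} \<inter> {1..k})" using image_Int[OF injx] by simp
  finally show ?thesis unfolding rr_def using card_image[OF inj_on_subset[OF injx]] by simp
qed

lemma rr_dcoset:
  assumes "v \<in> dcoset n m k l w"
  shows "rr n k v = rr n k w"
  using assms rr_inv unfolding dcoset_def by auto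

lemma rr_range:
  assumes NE: "n + m = k + l" and w: "w \<in> symgrp (n + m)"
  shows "n - l \<le> rr n k w" "rr n k w \<le> min n k"
proof -
  have wp: "w permutes {1..n+m}" using w by (simp add: symgrp_def)
  have injw: "inj w" using permutes_inj[OF wp] .
  let ?X = "w ` {1..n}"
  have cX: "card ?X = n" using card_image[OF inj_on_subset[OF injw]] by simp
  have Xs: "?X \<subseteq> {1..n+m}" using permutes_image[OF wp] by auto
  have split: "?X = (?X \<inter> {1..k}) \<union> (?X \<inter> {Suc k..n+m})" using Xs by auto
  have "card ?X = card (?X \<inter> {1..k}) + card (?X \<inter> {Suc k..n+m})"
    by (subst split, rule card_Un_disjoint) auto
  moreover have "card (?X \<inter> {Suc k..n+m}) \<le> l"
    using card_mono[of "{Suc k..n+m}" "?X \<inter> {Suc k..n+m}"] NE by auto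
  ultimately show "n - l \<le> rr n k w" unfolding rr_def using cX by linarith
  have "rr n k w \<le> card ?X" unfolding rr_def by (rule card_mono) auto
  moreover have "rr n k w \<le> k" unfolding rr_def using card_mono[of "{1..k}" "?X \<inter> {1..k}"] by auto
  ultimately show "rr n k w \<le> min n k" using cX by simp
qed

lemma perm_exists:
  assumes "finite S" "A \<subseteq> S" "B \<subseteq> S" "card A = card B"
  shows "\<exists>p. p permutes S \<and> p ` A = B"
proof -
  have fA: "finite A" "finite B" using assms finite_subset by auto
  obtain f where f: "bij_betw f A B" using finite_same_card_bij[OF fA assms(4)] by blast
  have "card (S - A) = card (S - B)"
    using assms card_Diff_subset[OF fA(1) assms(2)] card_Diff_subset[OF fA(2) assms(3)] by simp
  then obtain g where g: "bij_betw g (S - A) (S - B)"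
    using finite_same_card_bij assms(1) by blast
  define p where "p = (\<lambda>x. if x \<in> A then f x else if x \<in> S then g x else x)"
  have "bij_betw p A B" using f unfolding p_def by (rule bij_betw_cong[THEN iffD1, rotated]) auto
  moreover have "bij_betw p (S - A) (S - B)" using g unfolding p_def
    by (rule bij_betw_cong[THEN iffD1, rotated]) auto
  ultimately have "bij_betw p (A \<union> (S - A)) (B \<union> (S - B))" by (rule bij_betw_combine) auto
  then have "bij_betw p S S" using assms(2,3) by (simp add: Un_absorb1 Un_Diff_cancel)
  moreover have "\<And>x. x \<notin> S \<Longrightarrow> p x = x" unfolding p_def using assms(2) by auto
  ultimately have "p permutes S" by (rule bij_imp_permutes)
  moreover have "p ` A = B" using \<open>bij_betw p A B\<close> by (simp add: bij_betw_def)
  ultimately show ?thesis by blast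
qed

lemma rr_exists:
  assumes NE: "n + m = k + l" and r: "n - l \<le> r" "r \<le> min n k"
  shows "\<exists>v \<in> symgrp (n + m). rr n k v = r"
proof -
  define X where "X = {1..r} \<union> {Suc k..k + (n - r)}"
  have cX: "card X = n" unfolding X_def using r by (subst card_Un_disjoint) auto
  have Xs: "X \<subseteq> {1..n+m}" unfolding X_def using r NE by auto
  obtain p where p: "p permutes {1..n+m}" "p ` {1..n} = X"
    using perm_exists[of "{1..n+m}" "{1..n}" X] cX Xs by auto
  have "X \<inter> {1..k} = {1..r}" unfolding X_def using r by auto
  then have "rr n k p = r" unfolding rr_def p(2) by simp
  then show ?thesis using p(1) by (auto simp: symgrp_def)
qed



definition dfree :: "nat \<Rightarrow> nat \<Rightarrow> nat \<Rightarrow> (nat \<Rightarrow> nat) \<Rightarrow> bool" where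
  "dfree N n k w \<longleftrightarrow> (\<forall>i \<in> gens N. i \<noteq> n \<longrightarrow> w i < w (Suc i))
     \<and> (\<forall>j \<in> gens N. j \<noteq> k \<longrightarrow> inv w j < inv w (Suc j))"

lemma minreps_symgrp: "w \<in> minreps n m k l \<Longrightarrow> w \<in> symgrp (n + m)"
  by (simp add: minreps_def)

lemma minreps_min:
  assumes NE: "n + m = k + l" and w: "w \<in> minreps n m k l" and v: "v \<in> dcoset n m k l w"
  shows "ninv (n + m) w \<le> ninv (n + m) v"
proof -
  have wS: "w \<in> symgrp (n + m)" using w by (simp add: minreps_def)
  have vS: "v \<in> symgrp (n + m)" by (rule dcoset_symgrp[OF NE wS v])
  have "len (n + m) w \<le> len (n + m) v" using w v by (simp add: minreps_def)
  then show ?thesis using len_eq[OF wS] len_eq[OF vS] by simp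
qed

lemma minreps_dfree:
  assumes NE: "n + m = k + l" and w: "w \<in> minreps n m k l"
  shows "dfree (n + m) n k w"
  unfolding dfree_def
proof (intro conjI ballI impI)
  have wS: "w \<in> symgrp (n + m)" using w by (simp add: minreps_def)
  have wp: "w permutes {1..n+m}" using wS by (simp add: symgrp_def)
  fix i assume i: "i \<in> gens (n + m)" "i \<noteq> n"
  have "w \<circ> simple i \<in> dcoset n m k l w" unfolding dcoset_def
    using young_simple[OF i] by (intro CollectI exI[of _ id] exI[of _ "simple i"]) simp
  then have le: "ninv (n + m) w \<le> ninv (n + m) (w \<circ> simple i)" by (rule minreps_min[OF NE w])
  show "w i < w (Suc i)"
  proof (rule ccontr)
    assume "\<not> w i < w (Suc i)"
    then have "w (Suc i) < w i" using perm_neq[OF wp, of i "Suc i"] by linarith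
    then show False using ninv_right(2)[OF wp i(1)] le by simp
  qed
next
  have wS: "w \<in> symgrp (n + m)" using w by (simp add: minreps_def)
  have wp: "w permutes {1..n+m}" using wS by (simp add: symgrp_def)
  fix j assume j: "j \<in> gens (n + m)" "j \<noteq> k"
  have j': "j \<in> gens (k + l)" using j NE by simp
  have "simple j \<circ> w \<in> dcoset n m k l w" unfolding dcoset_def
    using young_simple[OF j' j(2)] by (intro CollectI exI[of _ "simple j"] exI[of _ id]) simp
  then have le: "ninv (n + m) w \<le> ninv (n + m) (simple j \<circ> w)" by (rule minreps_min[OF NE w])
  show "inv w j < inv w (Suc j)"
  proof (rule ccontr)
    assume "\<not> inv w j < inv w (Suc j)"
    then have "inv w (Suc j) < inv w j" using ninv_left(3)[OF wp j(1)] by linarith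
    then show False using ninv_left(2)[OF wp j(1)] le by simp
  qed
qed

lemma initial_seg:
  assumes "finite S" "S \<subseteq> {Suc c..}" "\<And>j j'. j \<in> S \<Longrightarrow> c < j' \<Longrightarrow> j' \<le> j \<Longrightarrow> j' \<in> S"
  shows "S = {Suc c..c + card S}"
proof (cases "S = {}")
  case True then show ?thesis by simp
next
  case False
  define M where "M = Max S"
  have MS: "M \<in> S" unfolding M_def using assms(1) False by simp
  have "S = {Suc c..M}"
  proof
    show "S \<subseteq> {Suc c..M}" using assms(1,2) unfolding M_def by auto
    show "{Suc c..M} \<subseteq> S" using assms(3)[OF MS] by auto
  qed
  moreover have "M \<ge> Suc c" using MS assms(2) by auto
  ultimately show ?thesis by simp
qed

lemma det_aux:
  assumes NE: "n + m = k + l" and wS: "w \<in> symgrp (n + m)" and df: "dfree (n + m) n k w"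
  shows "w ` {1..n} = {1..rr n k w} \<union> {Suc k..k + (n - rr n k w)}"
proof -
  let ?N = "n + m"
  have wp: "w permutes {1..?N}" using wS by (simp add: symgrp_def)
  have ip: "inv w permutes {1..?N}" using permutes_inv[OF wp] .
  have injw: "inj w" using permutes_inj[OF wp] .
  have inrange: "\<And>j. j \<in> {1..?N} \<Longrightarrow> inv w j \<in> {1..?N}"
    using permutes_in_image[OF ip] by blast
  have memX: "\<And>j. (j \<in> w ` {1..n}) = (inv w j \<in> {1..n})"
  proof -
    fix j show "(j \<in> w ` {1..n}) = (inv w j \<in> {1..n})"
      using permutes_inverses[OF wp] by (metis imageE image_eqI)
  qed
  have dj: "\<And>j. j \<in> gens ?N \<Longrightarrow> j \<noteq> k \<Longrightarrow> inv w j < inv w (Suc j)" using df by (simp add: dfree_def)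
  have monoL: "\<And>x y. 1 \<le> x \<Longrightarrow> x < y \<Longrightarrow> y \<le> k \<Longrightarrow> inv w x < inv w y"
    by (rule incr_from_succ[of 1 k]) (use dj NE in \<open>auto simp: gens_def\<close>)
  have monoR: "\<And>x y. Suc k \<le> x \<Longrightarrow> x < y \<Longrightarrow> y \<le> ?N \<Longrightarrow> inv w x < inv w y"
    by (rule incr_from_succ[of "Suc k" ?N]) (use dj in \<open>auto simp: gens_def\<close>)
  let ?X = "w ` {1..n}"
  let ?SL = "?X \<inter> {1..k}"
  let ?SR = "?X \<inter> {Suc k..?N}"
  have SL: "?SL = {Suc 0..0 + card ?SL}"
  proof (rule initial_seg)
    fix j j' assume j: "j \<in> ?SL" "0 < j'" "j' \<le> j"
    show "j' \<in> ?SL"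
    proof (cases "j' = j")
      case False
      then have "inv w j' < inv w j" using monoL[of j' j] j by auto
      moreover have "inv w j \<in> {1..n}" using j memX by blast
      moreover have "inv w j' \<in> {1..?N}" using inrange[of j'] j NE by auto
      ultimately have "inv w j' \<in> {1..n}" by auto
      then show ?thesis using memX j by auto
    qed (use j in auto)
  qed auto
  have SR: "?SR = {Suc k..k + card ?SR}"
  proof (rule initial_seg)
    fix j j' assume j: "j \<in> ?SR" "k < j'" "j' \<le> j"
    show "j' \<in> ?SR"
    proof (cases "j' = j")
      case False
      then have "inv w j' < inv w j" using monoR[of j' j] j by auto
      moreover have "inv w j \<in> {1..n}" using j memX by blast
      moreover have "inv w j' \<in> {1..?N}" using inrange[of j'] j by auto
      ultimately have "inv w j' \<in> {1..n}" by auto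
      then show ?thesis using memX j by auto
    qed (use j in auto)
  qed auto
  have cX: "card ?X = n" using card_image[OF inj_on_subset[OF injw]] by simp
  have Xs: "?X \<subseteq> {1..?N}" using permutes_image[OF wp] by auto
  have split: "?X = ?SL \<union> ?SR" using Xs by auto
  have "card (?SL \<union> ?SR) = card ?SL + card ?SR"
    by (rule card_Un_disjoint) auto
  moreover have "card ?X = card (?SL \<union> ?SR)" by (rule arg_cong[OF split])
  ultimately have "card ?X = card ?SL + card ?SR" by linarith
  then have cSR: "card ?SR = n - rr n k w" using cX unfolding rr_def by simp
  define r where "r = card ?SL"
  define c where "c = card ?SR"
  have SL': "?SL = {Suc 0..0 + r}" using SL unfolding r_def .
  have SR': "?SR = {Suc k..k + c}" using SR unfolding c_def .
  have "?X = ?SL \<union> ?SR" by (rule split)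
  also have "\<dots> = {Suc 0..0 + r} \<union> {Suc k..k + c}" by (rule arg_cong2[OF SL' SR'])
  finally show ?thesis using cSR unfolding rr_def c_def[symmetric] r_def[symmetric] by simp
qed

lemma det:
  assumes NE: "n + m = k + l" and wS: "w \<in> symgrp (n + m)" and w'S: "w' \<in> symgrp (n + m)"
    and df: "dfree (n + m) n k w" and df': "dfree (n + m) n k w'" and r: "rr n k w = rr n k w'"
  shows "w = w'"
proof -
  let ?N = "n + m"
  have wp: "w permutes {1..?N}" using wS by (simp add: symgrp_def)
  have wp': "w' permutes {1..?N}" using w'S by (simp add: symgrp_def)
  have X: "w ` {1..n} = w' ` {1..n}" using det_aux[OF NE wS df] det_aux[OF NE w'S df'] r by simp
  have spl: "{1..?N} = {1..n} \<union> {Suc n..?N}" by auto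
  have imgR: "\<And>p. p permutes {1..?N} \<Longrightarrow> p ` {Suc n..?N} = {1..?N} - p ` {1..n}"
  proof -
    fix p :: "nat \<Rightarrow> nat" assume p: "p permutes {1..?N}"
    have "p ` {Suc n..?N} = p ` ({1..?N} - {1..n})" by (rule arg_cong[where f="image p"]) auto
    also have "\<dots> = p ` {1..?N} - p ` {1..n}" by (rule image_set_diff[OF permutes_inj[OF p]])
    finally show "p ` {Suc n..?N} = {1..?N} - p ` {1..n}" using permutes_image[OF p] by simp
  qed
  have "w ` {Suc n..?N} = {1..?N} - w ` {1..n}" by (rule imgR[OF wp])
  also have "\<dots> = {1..?N} - w' ` {1..n}" by (simp only: X)
  also have "\<dots> = w' ` {Suc n..?N}" by (rule imgR[OF wp', symmetric])
  finally have XR: "w ` {Suc n..?N} = w' ` {Suc n..?N}" .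
  have mL: "\<And>v x y. dfree ?N n k v \<Longrightarrow> 1 \<le> x \<Longrightarrow> x < y \<Longrightarrow> y \<le> n \<Longrightarrow> v x < v y"
  proof -
    fix v :: "nat \<Rightarrow> nat" and x y assume d: "dfree ?N n k v" and h: "1 \<le> x" "x < y" "y \<le> n"
    have d1: "\<forall>i \<in> gens ?N. i \<noteq> n \<longrightarrow> v i < v (Suc i)" using d unfolding dfree_def by blast
    have s: "\<And>i. 1 \<le> i \<Longrightarrow> i < n \<Longrightarrow> v i < v (Suc i)"
    proof -
      fix i assume "1 \<le> i" "i < n"
      then have "i \<in> gens ?N" "i \<noteq> n" by (auto simp: gens_def)
      then show "v i < v (Suc i)" using d1 by blast
    qed
    show "v x < v y" by (rule incr_from_succ[of 1 n v, OF s h])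
  qed
  have mR: "\<And>v x y. dfree ?N n k v \<Longrightarrow> Suc n \<le> x \<Longrightarrow> x < y \<Longrightarrow> y \<le> ?N \<Longrightarrow> v x < v y"
  proof -
    fix v :: "nat \<Rightarrow> nat" and x y assume d: "dfree ?N n k v" and h: "Suc n \<le> x" "x < y" "y \<le> ?N"
    have d1: "\<forall>i \<in> gens ?N. i \<noteq> n \<longrightarrow> v i < v (Suc i)" using d unfolding dfree_def by blast
    have s: "\<And>i. Suc n \<le> i \<Longrightarrow> i < ?N \<Longrightarrow> v i < v (Suc i)"
    proof -
      fix i assume "Suc n \<le> i" "i < ?N"
      then have "i \<in> gens ?N" "i \<noteq> n" by (auto simp: gens_def)
      then show "v i < v (Suc i)" using d1 by blast
    qed
    show "v x < v y" by (rule incr_from_succ[of "Suc n" ?N v, OF s h])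
  qed
  show ?thesis
  proof (rule ext)
    fix x
    consider "x \<in> {1..n}" | "x \<in> {Suc n..?N}" | "x \<notin> {1..?N}" by fastforce
    then show "w x = w' x"
    proof cases
      case 1
      show ?thesis by (rule mono_unique[of 1 n w w', OF mL[OF df] mL[OF df'] X 1])
    next
      case 2
      show ?thesis by (rule mono_unique[of "Suc n" ?N w w', OF mR[OF df] mR[OF df'] XR 2])
    next
      case 3
      then show ?thesis using permutes_not_in[OF wp] permutes_not_in[OF wp'] by simp
    qed
  qed
qed



lemma minreps_inj:
  assumes NE: "n + m = k + l"
  shows "inj_on (rr n k) (minreps n m k l)"
proof (rule inj_onI)
  fix w w' assume w: "w \<in> minreps n m k l" and w': "w' \<in> minreps n m k l" and r: "rr n k w = rr n k w'"
  show "w = w'" by (rule det[OF NE minreps_symgrp[OF w] minreps_symgrp[OF w']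
        minreps_dfree[OF NE w] minreps_dfree[OF NE w'] r])
qed

lemma minreps_surj:
  assumes NE: "n + m = k + l" and r: "n - l \<le> r" "r \<le> min n k"
  shows "\<exists>w \<in> minreps n m k l. rr n k w = r"
proof -
  obtain v where v: "v \<in> symgrp (n + m)" "rr n k v = r" using rr_exists[OF NE r] by blast
  let ?D = "dcoset n m k l v"
  have Dsub: "?D \<subseteq> symgrp (n + m)" using dcoset_symgrp[OF NE v(1)] by blast
  have fD: "finite ?D" using finite_subset[OF Dsub finite_symgrp] .
  have neD: "?D \<noteq> {}" using dcoset_self[of v] by blast
  define M where "M = Min (ninv (n + m) ` ?D)"
  have "M \<in> ninv (n + m) ` ?D" unfolding M_def using fD neD by simp
  then obtain w where w: "w \<in> ?D" "ninv (n + m) w = M" by blast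
  have wS: "w \<in> symgrp (n + m)" using w Dsub by blast
  have "w \<in> minreps n m k l" unfolding minreps_def
  proof (intro CollectI conjI ballI wS)
    fix u assume u: "u \<in> dcoset n m k l w"
    have uD: "u \<in> ?D" by (rule dcoset_trans[OF w(1) u])
    have uS: "u \<in> symgrp (n + m)" using uD Dsub by blast
    have "M \<le> ninv (n + m) u" unfolding M_def using fD uD by simp
    then show "len (n + m) w \<le> len (n + m) u" using len_eq[OF wS] len_eq[OF uS] w(2) by simp
  qed
  moreover have "rr n k w = r" using rr_dcoset[OF w(1)] v(2) by simp
  ultimately show ?thesis by blast
qed

lemma card_minreps:
  assumes NE: "n + m = k + l"
  shows "card (minreps n m k l) = min (min n m) (min k l) + 1"
proof -
  have "bij_betw (rr n k) (minreps n m k l) {n - l..min n k}"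
    unfolding bij_betw_def
  proof
    show "inj_on (rr n k) (minreps n m k l)" by (rule minreps_inj[OF NE])
    show "rr n k ` minreps n m k l = {n - l..min n k}"
    proof
      show "rr n k ` minreps n m k l \<subseteq> {n - l..min n k}"
        using rr_range[OF NE minreps_symgrp] by auto
      show "{n - l..min n k} \<subseteq> rr n k ` minreps n m k l"
      proof
        fix r assume "r \<in> {n - l..min n k}"
        then obtain w where "w \<in> minreps n m k l" "rr n k w = r"
          using minreps_surj[OF NE, of r] by auto
        then show "r \<in> rr n k ` minreps n m k l" by blast
      qed
    qed
  qed
  then have "card (minreps n m k l) = card {n - l..min n k}" by (rule bij_betw_same_card)
  also have "\<dots> = Suc (min n k) - (n - l)" by simp
  also have "\<dots> = min (min n m) (min k l) + 1" using NE by (simp add: min_def) arith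
  finally show ?thesis .
qed

lemma minreps_unique:
  assumes NE: "n + m = k + l" and w0: "w0 \<in> minreps n m k l" and w1: "w1 \<in> minreps n m k l"
    and z0: "z \<in> dcoset n m k l w0" and z1: "z \<in> dcoset n m k l w1"
  shows "w0 = w1"
proof -
  have "rr n k w0 = rr n k w1" using rr_dcoset[OF z0] rr_dcoset[OF z1] by simp
  then show ?thesis using minreps_inj[OF NE] w0 w1 by (auto dest: inj_onD)
qed

lemma factorization:
  assumes NE: "n + m = k + l"
  shows "z \<in> symgrp (n + m) \<Longrightarrow> \<exists>u v w0. set u \<subseteq> gamma_gens k l \<and> set v \<subseteq> gamma_gens n m \<and>
      w0 \<in> minreps n m k l \<and> z = perm_of_word u \<circ> w0 \<circ> perm_of_word v \<and>
      length u + ninv (n + m) w0 + length v = ninv (n + m) z"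
proof (induction "ninv (n + m) z" arbitrary: z rule: less_induct)
  case less
  let ?N = "n + m"
  have zp: "z permutes {1..?N}" using less.prems by (simp add: symgrp_def)
  show ?case
  proof (cases "\<exists>i \<in> gens ?N. i \<noteq> n \<and> z (Suc i) < z i")
    case True
    then obtain i where i: "i \<in> gens ?N" "i \<noteq> n" "z (Suc i) < z i" by blast
    have e: "Suc (ninv ?N (z \<circ> simple i)) = ninv ?N z" by (rule ninv_right(2)[OF zp i(1) i(3)])
    have zS: "z \<circ> simple i \<in> symgrp ?N" by (rule symgrp_comp[OF less.prems simple_symgrp[OF i(1)]])
    obtain u v w0 where h: "set u \<subseteq> gamma_gens k l" "set v \<subseteq> gamma_gens n m" "w0 \<in> minreps n m k l"
      "z \<circ> simple i = perm_of_word u \<circ> w0 \<circ> perm_of_word v"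
      "length u + ninv ?N w0 + length v = ninv ?N (z \<circ> simple i)"
      using less.hyps[OF _ zS] e by (metis lessI)
    have "z = perm_of_word u \<circ> w0 \<circ> perm_of_word (v @ [i])"
    proof -
      have "z = (z \<circ> simple i) \<circ> simple i" by (simp add: comp_assoc)
      also have "\<dots> = perm_of_word u \<circ> w0 \<circ> perm_of_word (v @ [i])"
        unfolding h(4) pw_snoc by (simp add: comp_assoc)
      finally show ?thesis .
    qed
    moreover have "set (v @ [i]) \<subseteq> gamma_gens n m" using h(2) i by (auto simp: gamma_gens_eq)
    moreover have "length u + ninv ?N w0 + length (v @ [i]) = ninv ?N z" using h(5) e by simp
    ultimately show ?thesis using h(1,3) by blast
  next
    case False
    note F1 = False
    show ?thesis
    proof (cases "\<exists>j \<in> gens ?N. j \<noteq> k \<and> inv z (Suc j) < inv z j")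
      case True
      then obtain j where j: "j \<in> gens ?N" "j \<noteq> k" "inv z (Suc j) < inv z j" by blast
      have e: "Suc (ninv ?N (simple j \<circ> z)) = ninv ?N z" by (rule ninv_left(2)[OF zp j(1) j(3)])
      have zS: "simple j \<circ> z \<in> symgrp ?N" by (rule symgrp_comp[OF simple_symgrp[OF j(1)] less.prems])
      obtain u v w0 where h: "set u \<subseteq> gamma_gens k l" "set v \<subseteq> gamma_gens n m" "w0 \<in> minreps n m k l"
        "simple j \<circ> z = perm_of_word u \<circ> w0 \<circ> perm_of_word v"
        "length u + ninv ?N w0 + length v = ninv ?N (simple j \<circ> z)"
        using less.hyps[OF _ zS] e by (metis lessI)
      have "z = perm_of_word (j # u) \<circ> w0 \<circ> perm_of_word v"
      proof -
        have "z = simple j \<circ> (simple j \<circ> z)" by (simp add: comp_assoc[symmetric])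
        also have "\<dots> = perm_of_word (j # u) \<circ> w0 \<circ> perm_of_word v"
          unfolding h(4) pw_Cons by (simp add: comp_assoc)
        finally show ?thesis .
      qed
      moreover have "set (j # u) \<subseteq> gamma_gens k l" using h(1) j NE by (auto simp: gamma_gens_eq)
      moreover have "length (j # u) + ninv ?N w0 + length v = ninv ?N z" using h(5) e by simp
      ultimately show ?thesis using h(2,3) by blast
    next
      case False
      have df: "dfree ?N n k z" unfolding dfree_def
      proof (intro conjI ballI impI)
        fix i assume "i \<in> gens ?N" "i \<noteq> n"
        then show "z i < z (Suc i)" using F1 perm_neq[OF zp, of i "Suc i"] by fastforce
      next
        fix j assume "j \<in> gens ?N" "j \<noteq> k"
        then show "inv z j < inv z (Suc j)" using False ninv_left(3)[OF zp] by fastforce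
      qed
      obtain w0 where w0: "w0 \<in> minreps n m k l" "rr n k w0 = rr n k z"
        using minreps_surj[OF NE rr_range[OF NE less.prems]] by blast
      have "z = w0" by (rule det[OF NE less.prems minreps_symgrp[OF w0(1)] df minreps_dfree[OF NE w0(1)] w0(2)[symmetric]])
      then show ?thesis using w0(1) by (intro exI[of _ "[]"] exI[of _ "[]"] exI[of _ w0]) simp
    qed
  qed
qed



definition Red :: "nat \<Rightarrow> (nat \<Rightarrow> nat) \<Rightarrow> nat list set" where
  "Red N z = {u. set u \<subseteq> gens N \<and> perm_of_word u = z \<and> length u = ninv N z}"

definition Phi :: "nat \<Rightarrow> (nat \<Rightarrow> nat) \<Rightarrow> fa \<Rightarrow> rat" where
  "Phi N z x = (\<Sum>u\<in>Red N z. x u)"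

lemma finite_gens: "finite (gens N)"
  by (rule finite_subset[of _ "{..<N}"]) (auto simp: gens_def)

lemma finite_Red: "finite (Red N z)"
  by (rule finite_subset[OF _ finite_lists_length_eq[OF finite_gens, of N "ninv N z"]])
     (auto simp: Red_def)

lemma Phi_lin: "Phi N z (\<lambda>w. a * x w + y w) = a * Phi N z x + Phi N z y"
  unfolding Phi_def by (simp add: sum.distrib sum_distrib_left)

lemma Phi_0: "Phi N z (\<lambda>w. 0) = 0"
  unfolding Phi_def by simp

lemma Phi_diff: "Phi N z (\<lambda>w. x w - y w) = Phi N z x - Phi N z y"
  unfolding Phi_def by (simp add: sum_subtractf)

lemma Phi_sum: "Phi N z (\<lambda>w. \<Sum>a\<in>A. f a w) = (\<Sum>a\<in>A. Phi N z (f a))"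
  unfolding Phi_def by (rule sum.swap)

lemma Phi_wd: "Phi N z (wd u) = (if u \<in> Red N z then 1 else 0)"
  unfolding Phi_def wd_def using finite_Red by (simp add: sum.delta)

lemma Red_iff: "u \<in> Red N z \<longleftrightarrow> rd N u \<and> perm_of_word u = z"
  by (auto simp: Red_def rd_def)

lemma Red_cong:
  assumes "set u \<subseteq> gens N" "set v \<subseteq> gens N" "perm_of_word u = perm_of_word v" "length u = length v"
  shows "(u \<in> Red N z) = (v \<in> Red N z)"
  using assms by (auto simp: Red_def)

lemma Phi_ideal:
  assumes "x \<in> ncideal N"
  shows "Phi N z x = 0"
  using assms unfolding ncideal_def
proof (rule lspan_induct)
  show "Phi N z (\<lambda>w. 0) = 0" by (rule Phi_0)
next
  fix x y :: fa and a :: rat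
  assume "Phi N z x = 0" "Phi N z y = 0"
  then show "Phi N z (\<lambda>w. a * x w + y w) = 0" by (simp add: Phi_lin)
next
  fix b assume "b \<in> {fa_mult (fa_mult (wd u) r) (wd v) |u v r.
      set u \<subseteq> gens N \<and> set v \<subseteq> gens N \<and> r \<in> relators N}"
  then obtain a c r where b: "b = fa_mult (fa_mult (wd a) r) (wd c)" "set a \<subseteq> gens N"
    "set c \<subseteq> gens N" "r \<in> relators N" by blast
  have gd: "\<And>x y. fa_mult (fa_mult (wd a) (\<lambda>w. wd x w - wd y w)) (wd c)
      = (\<lambda>w. wd (a @ x @ c) w - wd (a @ y @ c) w)"
    by (simp add: fa_mult_diff_left fa_mult_diff_right wd_mult)
  consider (sq) i where "r = wd [i, i]" "i \<in> gens N"
    | (cm) i j where "r = (\<lambda>w. wd [i, j] w - wd [j, i] w)" "i \<in> gens N" "j \<in> gens N" "i + 1 < j \<or> j + 1 < i"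
    | (br) i where "r = (\<lambda>w. wd [i, i + 1, i] w - wd [i + 1, i, i + 1] w)" "i \<in> gens N" "i + 1 \<in> gens N"
    using b(4) unfolding relators_def by blast
  then show "Phi N z b = 0"
  proof cases
    case sq
    have bw: "b = wd (a @ [i, i] @ c)" unfolding b(1) sq(1) by (simp add: wd_mult)
    have "perm_of_word (a @ [i, i] @ c) = perm_of_word (a @ c)"
      by (simp add: pw_append comp_assoc[symmetric])
    moreover have "ninv N (perm_of_word (a @ c)) \<le> length (a @ c)"
      by (rule ninv_le_length) (use b in auto)
    ultimately have "a @ [i, i] @ c \<notin> Red N z" by (auto simp: Red_def)
    then show ?thesis unfolding bw Phi_wd by simp
  next
    case cm
    have "perm_of_word (a @ [i, j] @ c) = perm_of_word (a @ [j, i] @ c)"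
      using simple_comm[OF cm(4)] by (simp add: pw_append comp_assoc[symmetric])
    then have "(a @ [i, j] @ c \<in> Red N z) = (a @ [j, i] @ c \<in> Red N z)"
      by (intro Red_cong) (use b cm in auto)
    then show ?thesis unfolding b(1) cm(1) gd Phi_diff Phi_wd by simp
  next
    case br
    have "perm_of_word (a @ [i, i + 1, i] @ c) = perm_of_word (a @ [i + 1, i, i + 1] @ c)"
      using simple_braid[of i] by (simp add: pw_append comp_assoc[symmetric])
    then have "(a @ [i, i + 1, i] @ c \<in> Red N z) = (a @ [i + 1, i, i + 1] @ c \<in> Red N z)"
      by (intro Red_cong) (use b br in auto)
    then show ?thesis unfolding b(1) br(1) gd Phi_diff Phi_wd by simp
  qed
qed

definition SY :: "nat \<Rightarrow> fa \<Rightarrow> fa" where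
  "SY N x = (\<lambda>w. \<Sum>z\<in>symgrp N. Phi N z x * Yw N z w)"

lemma key:
  assumes "x \<in> ncfree N"
  shows "eqv N x (SY N x)"
  using assms unfolding ncfree_def
proof (rule lspan_induct)
  show "eqv N (\<lambda>w. 0) (SY N (\<lambda>w. 0))" unfolding SY_def Phi_0 using eqv_refl by simp
next
  fix x y :: fa and a :: rat
  assume hx: "eqv N x (SY N x)" and hy: "eqv N y (SY N y)"
  have "SY N (\<lambda>w. a * x w + y w) = (\<lambda>w. a * SY N x w + SY N y w)"
    unfolding SY_def Phi_lin by (simp add: sum.distrib sum_distrib_left algebra_simps)
  moreover have "(\<lambda>w. a * (x w - SY N x w) + (y w - SY N y w)) \<in> ncideal N"
    using hx hy unfolding eqv_def ncideal_def by (rule lspan_lin)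
  ultimately show "eqv N (\<lambda>w. a * x w + y w) (SY N (\<lambda>w. a * x w + y w))"
    unfolding eqv_def by (simp add: algebra_simps)
next
  fix b assume "b \<in> wd ` {u. set u \<subseteq> gens N}"
  then obtain u where u: "b = wd u" "set u \<subseteq> gens N" by blast
  have pS: "perm_of_word u \<in> symgrp N" by (rule pw_symgrp[OF u(2)])
  have "SY N (wd u) = (\<lambda>w. \<Sum>z\<in>symgrp N. (if z = perm_of_word u then (if rd N u then Yw N z w else 0) else 0))"
    unfolding SY_def Phi_wd Red_iff by (intro ext sum.cong) auto
  also have "\<dots> = (if rd N u then Yw N (perm_of_word u) else (\<lambda>w. 0))"
    using finite_symgrp pS by (auto simp: sum.delta')
  finally show "eqv N b (SY N b)" using word_reduce[OF u(2)] u(1) by simp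
qed

lemma key':
  assumes "x \<in> ncfree N" "\<And>z. z \<in> symgrp N \<Longrightarrow> Phi N z x = 0"
  shows "x \<in> ncideal N"
proof -
  have "SY N x = (\<lambda>w. 0)" unfolding SY_def using assms(2) by simp
  then show ?thesis using key[OF assms(1)] by (simp add: eqv_def)
qed



definition yw :: "nat \<Rightarrow> (nat \<Rightarrow> nat) \<Rightarrow> nat list" where
  "yw N w0 = (SOME u. reduced_word N w0 u)"

lemma Yw_yw: "Yw N w0 = wd (yw N w0)" by (simp add: Yw_def yw_def)

lemma yw_props:
  assumes "w0 \<in> symgrp N"
  shows "rd N (yw N w0)" "perm_of_word (yw N w0) = w0"
proof -
  have ex: "\<exists>y. reduced_word N w0 y"
    using reduced_word_exists[OF assms] len_eq[OF assms] by (auto simp: reduced_word_def)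
  have "reduced_word N w0 (yw N w0)" unfolding yw_def using someI_ex[OF ex] .
  then show "rd N (yw N w0)" "perm_of_word (yw N w0) = w0"
    using len_eq[OF assms] by (auto simp: reduced_word_def rd_def)
qed

lemma gen_formula:
  "fa_mult (fa_mult (wd u) (Yw N w0)) (wd v) = wd (u @ yw N w0 @ v)"
  by (simp add: Yw_yw wd_mult)

lemma gamma_sub: "gamma_gens a b \<subseteq> gens (a + b)"
  by (auto simp: gamma_gens_eq)

lemma genbimod_ncfree:
  assumes NE: "n + m = k + l" and w0: "w0 \<in> symgrp (n + m)"
  shows "genbimod n m k l w0 \<subseteq> ncfree (n + m)"
proof
  fix g assume g: "g \<in> genbimod n m k l w0"
  show "g \<in> ncfree (n + m)"
    using g unfolding genbimod_def ncfree_def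
  proof (rule lspan_subset[rotated])
    show "{fa_mult (fa_mult (wd u) (Yw (n + m) w0)) (wd v) |u v.
        set u \<subseteq> gamma_gens k l \<and> set v \<subseteq> gamma_gens n m} \<subseteq> lspan (wd ` {u. set u \<subseteq> gens (n + m)})"
    proof
      fix b assume "b \<in> {fa_mult (fa_mult (wd u) (Yw (n + m) w0)) (wd v) |u v.
        set u \<subseteq> gamma_gens k l \<and> set v \<subseteq> gamma_gens n m}"
      then obtain u v where uv: "b = wd (u @ yw (n + m) w0 @ v)" "set u \<subseteq> gamma_gens k l"
        "set v \<subseteq> gamma_gens n m" by (auto simp: gen_formula)
      have "set (u @ yw (n + m) w0 @ v) \<subseteq> gens (n + m)"
        using uv gamma_sub[of k l] gamma_sub[of n m] yw_props(1)[OF w0] NE by (auto simp: rd_def)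
      then show "b \<in> lspan (wd ` {u. set u \<subseteq> gens (n + m)})" using uv(1) by (auto intro: lspan_base)
    qed
  qed
qed

lemma Phi_genbimod:
  assumes NE: "n + m = k + l" and w0: "w0 \<in> symgrp (n + m)" and z: "z \<notin> dcoset n m k l w0"
    and g: "g \<in> genbimod n m k l w0"
  shows "Phi (n + m) z g = 0"
  using g unfolding genbimod_def
proof (rule lspan_induct)
  show "Phi (n + m) z (\<lambda>w. 0) = 0" by (rule Phi_0)
next
  fix x y :: fa and a :: rat
  assume "Phi (n + m) z x = 0" "Phi (n + m) z y = 0"
  then show "Phi (n + m) z (\<lambda>w. a * x w + y w) = 0" by (simp add: Phi_lin)
next
  fix b assume "b \<in> {fa_mult (fa_mult (wd u) (Yw (n + m) w0)) (wd v) |u v.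
        set u \<subseteq> gamma_gens k l \<and> set v \<subseteq> gamma_gens n m}"
  then obtain u v where uv: "b = wd (u @ yw (n + m) w0 @ v)" "set u \<subseteq> gamma_gens k l"
    "set v \<subseteq> gamma_gens n m" by (auto simp: gen_formula)
  have "u @ yw (n + m) w0 @ v \<notin> Red (n + m) z"
  proof
    assume "u @ yw (n + m) w0 @ v \<in> Red (n + m) z"
    then have "z = perm_of_word u \<circ> w0 \<circ> perm_of_word v"
      using yw_props(2)[OF w0] by (auto simp: Red_def pw_append comp_assoc)
    moreover have "perm_of_word u \<in> young k l" "perm_of_word v \<in> young n m"
      using young_pw uv by auto
    ultimately have "z \<in> dcoset n m k l w0" unfolding dcoset_def by blast
    then show False using z by simp
  qed
  then show "Phi (n + m) z b = 0" unfolding uv(1) Phi_wd by simp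
qed

lemma part2:
  assumes NE: "n + m = k + l" and x: "x \<in> ncfree (n + m)"
  shows "\<exists>f. (\<forall>w \<in> minreps n m k l. f w \<in> genbimod n m k l w)
          \<and> (\<lambda>u. x u - (\<Sum>w \<in> minreps n m k l. f w u)) \<in> ncideal (n + m)"
proof -
  let ?N = "n + m"
  let ?S = "symgrp ?N"
  let ?M = "minreps n m k l"
  let ?P = "\<lambda>z t. set (fst t) \<subseteq> gamma_gens k l \<and> set (fst (snd t)) \<subseteq> gamma_gens n m \<and>
      snd (snd t) \<in> ?M \<and> z = perm_of_word (fst t) \<circ> snd (snd t) \<circ> perm_of_word (fst (snd t)) \<and>
      length (fst t) + ninv ?N (snd (snd t)) + length (fst (snd t)) = ninv ?N z"
  define T where "T z = (SOME t. ?P z t)" for z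
  have T: "?P z (T z)" if zS: "z \<in> ?S" for z
  proof -
    obtain u v w0 where h: "set u \<subseteq> gamma_gens k l" "set v \<subseteq> gamma_gens n m" "w0 \<in> ?M"
      "z = perm_of_word u \<circ> w0 \<circ> perm_of_word v" "length u + ninv ?N w0 + length v = ninv ?N z"
      using factorization[OF NE zS] by blast
    have "?P z (u, v, w0)" unfolding fst_conv snd_conv by (intro conjI h(1) h(2) h(3) h(4) h(5))
    then show ?thesis unfolding T_def by (rule someI[of "?P z"])
  qed
  define U where "U z = fst (T z)" for z
  define V where "V z = fst (snd (T z))" for z
  define W where "W z = snd (snd (T z))" for z
  define word where "word z = U z @ yw ?N (W z) @ V z" for z
  have WM: "W z \<in> ?M" if "z \<in> ?S" for z using T[OF that] unfolding W_def by simp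
  have word_gen: "wd (word z) \<in> {fa_mult (fa_mult (wd u) (Yw ?N (W z))) (wd v) |u v.
        set u \<subseteq> gamma_gens k l \<and> set v \<subseteq> gamma_gens n m}" if "z \<in> ?S" for z
    using T[OF that] unfolding word_def U_def V_def gen_formula by blast
  have word_Red: "(word z \<in> Red ?N z') = (z = z')" if "z \<in> ?S" for z z'
  proof -
    have w0S: "W z \<in> ?S" using WM[OF that] by (rule minreps_symgrp)
    note yp = yw_props[OF w0S]
    have pz: "perm_of_word (word z) = z"
      using T[OF that] yp(2) unfolding word_def U_def V_def W_def by (simp add: pw_append comp_assoc)
    have lz: "length (word z) = ninv ?N z"
      using T[OF that] yp(1) yp(2) unfolding word_def U_def V_def W_def rd_def by simp
    have sz: "set (word z) \<subseteq> gens ?N"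
      using T[OF that] yp(1) gamma_sub[of k l] gamma_sub[of n m] NE
      unfolding word_def U_def V_def W_def rd_def by auto
    show ?thesis using pz lz sz by (auto simp: Red_def)
  qed
  define f where "f w0 = (\<lambda>w. \<Sum>z\<in>{z \<in> ?S. W z = w0}. Phi ?N z x * wd (word z) w)" for w0
  have fin: "finite ?S" by (rule finite_symgrp)
  have finM: "finite ?M" by (rule finite_subset[OF _ fin]) (auto simp: minreps_def)
  have fgen: "f w0 \<in> genbimod n m k l w0" if "w0 \<in> ?M" for w0
    unfolding f_def genbimod_def
  proof (rule lspan_sum)
    show "finite {z \<in> ?S. W z = w0}" using fin by simp
    fix z assume "z \<in> {z \<in> ?S. W z = w0}"
    then show "wd (word z) \<in> lspan {fa_mult (fa_mult (wd u) (Yw ?N w0)) (wd v) |u v.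
        set u \<subseteq> gamma_gens k l \<and> set v \<subseteq> gamma_gens n m}"
      using word_gen[of z] by (auto intro: lspan_base)
  qed
  have sumf: "(\<lambda>u. x u - (\<Sum>w \<in> ?M. f w u)) = (\<lambda>u. x u - (\<Sum>z\<in>?S. Phi ?N z x * wd (word z) u))"
  proof (rule ext)
    fix u
    have "(\<Sum>w \<in> ?M. f w u) = (\<Sum>z\<in>?S. Phi ?N z x * wd (word z) u)"
      unfolding f_def by (rule sum.group[OF fin finM]) (use WM in auto)
    then show "x u - (\<Sum>w \<in> ?M. f w u) = x u - (\<Sum>z\<in>?S. Phi ?N z x * wd (word z) u)" by simp
  qed
  have dfree: "(\<lambda>u. x u - (\<Sum>z\<in>?S. Phi ?N z x * wd (word z) u)) \<in> ncfree ?N"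
    unfolding ncfree_def
  proof (rule lspan_diff)
    show "x \<in> lspan (wd ` {u. set u \<subseteq> gens ?N})" using x unfolding ncfree_def .
    show "(\<lambda>u. \<Sum>z\<in>?S. Phi ?N z x * wd (word z) u) \<in> lspan (wd ` {u. set u \<subseteq> gens ?N})"
    proof (rule lspan_sum[OF fin])
      fix z assume z: "z \<in> ?S"
      have "word z \<in> Red ?N z" using word_Red[OF z] by simp
      then show "wd (word z) \<in> lspan (wd ` {u. set u \<subseteq> gens ?N})"
        by (auto simp: Red_def intro: lspan_base)
    qed
  qed
  have "(\<lambda>u. x u - (\<Sum>z\<in>?S. Phi ?N z x * wd (word z) u)) \<in> ncideal ?N"
  proof (rule key'[OF dfree])
    fix z' assume z': "z' \<in> ?S"
    have "Phi ?N z' (\<lambda>u. \<Sum>z\<in>?S. Phi ?N z x * wd (word z) u)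
        = (\<Sum>z\<in>?S. Phi ?N z' (\<lambda>u. Phi ?N z x * wd (word z) u))" by (rule Phi_sum)
    also have "\<dots> = (\<Sum>z\<in>?S. if z = z' then Phi ?N z x else 0)"
    proof (rule sum.cong[OF refl])
      fix z assume z: "z \<in> ?S"
      have "Phi ?N z' (\<lambda>u. Phi ?N z x * wd (word z) u) = Phi ?N z x * Phi ?N z' (wd (word z))"
        using Phi_lin[of ?N z' "Phi ?N z x" "wd (word z)" "\<lambda>w. 0"] by (simp add: Phi_0)
      then show "Phi ?N z' (\<lambda>u. Phi ?N z x * wd (word z) u) = (if z = z' then Phi ?N z x else 0)"
        using word_Red[OF z, of z'] by (simp add: Phi_wd)
    qed
    also have "\<dots> = Phi ?N z' x" using fin z' by (simp add: sum.delta')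
    finally show "Phi ?N z' (\<lambda>u. x u - (\<Sum>z\<in>?S. Phi ?N z x * wd (word z) u)) = 0"
      by (simp add: Phi_diff)
  qed
  then show ?thesis using fgen sumf by (intro exI[of _ f]) simp
qed

lemma part3:
  assumes NE: "n + m = k + l"
    and f: "\<forall>w \<in> minreps n m k l. f w \<in> genbimod n m k l w"
    and s: "(\<lambda>u. \<Sum>w \<in> minreps n m k l. f w u) \<in> ncideal (n + m)"
  shows "\<forall>w \<in> minreps n m k l. f w \<in> ncideal (n + m)"
proof
  let ?N = "n + m"
  let ?M = "minreps n m k l"
  fix w0 assume w0: "w0 \<in> ?M"
  have w0S: "w0 \<in> symgrp ?N" using w0 by (rule minreps_symgrp)
  have fw0: "f w0 \<in> ncfree ?N" using genbimod_ncfree[OF NE w0S] f w0 by blast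
  show "f w0 \<in> ncideal ?N"
  proof (rule key'[OF fw0])
    fix z assume z: "z \<in> symgrp ?N"
    show "Phi ?N z (f w0) = 0"
    proof (cases "z \<in> dcoset n m k l w0")
      case False
      then show ?thesis using Phi_genbimod[OF NE w0S False] f w0 by blast
    next
      case True
      have others: "Phi ?N z (f w) = 0" if "w \<in> ?M - {w0}" for w
      proof -
        have wM: "w \<in> ?M" and ne: "w \<noteq> w0" using that by auto
        have "z \<notin> dcoset n m k l w" using minreps_unique[OF NE w0 wM True] ne by blast
        then show ?thesis using Phi_genbimod[OF NE minreps_symgrp[OF wM]] f wM by blast
      qed
      have finM: "finite ?M" by (rule finite_subset[OF _ finite_symgrp]) (auto simp: minreps_def)
      have "0 = Phi ?N z (\<lambda>u. \<Sum>w \<in> ?M. f w u)" using Phi_ideal[OF s] by simp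
      also have "\<dots> = (\<Sum>w \<in> ?M. Phi ?N z (f w))" by (rule Phi_sum)
      also have "\<dots> = Phi ?N z (f w0) + (\<Sum>w \<in> ?M - {w0}. Phi ?N z (f w))"
        using finM w0 by (simp add: sum.remove)
      also have "\<dots> = Phi ?N z (f w0)" using others by simp
      finally show ?thesis by simp
    qed
  qed
qed

theorem mainTheorem15:
  fixes n m k l :: nat
  assumes "n + m = k + l"
  shows "card (minreps n m k l) = min (min n m) (min k l) + 1
    \<and> (\<forall>x \<in> ncfree (n + m). \<exists>f. (\<forall>w \<in> minreps n m k l. f w \<in> genbimod n m k l w)
          \<and> (\<lambda>u. x u - (\<Sum>w \<in> minreps n m k l. f w u)) \<in> ncideal (n + m))
    \<and> (\<forall>f. (\<forall>w \<in> minreps n m k l. f w \<in> genbimod n m k l w)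
          \<and> (\<lambda>u. \<Sum>w \<in> minreps n m k l. f w u) \<in> ncideal (n + m)
          \<longrightarrow> (\<forall>w \<in> minreps n m k l. f w \<in> ncideal (n + m)))"
  using card_minreps[OF assms] part2[OF assms] part3[OF assms] by blast

end
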